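(* In a phase space $Z_2$, the permanent source produced time harmonic perturbation propagation problem is well posed on every finite interval of time $[0,t_0]$, and the null solution is unstable (in the sense of Lyapunov) with respect to the class $Z_2$ of amplitudes.
   Context: Fix constants $U_0,c_0,\rho_0>0$, $\omega_f\in\mathbb{R}$, $h$ the Heaviside function. The permanent source produced time harmonic perturbation propagation problem with amplitude $A=(F,G,H,P)$: find $(v_x',v_y',v_z',p')$, zero for $t\le0$, with $\partial_t v_x' + U_0\partial_x v_x' + \frac1{\rho_0}\partial_x p' = h(t)F\sin\omega_f t$, $\partial_t v_y' + U_0\partial_x v_y' + \frac1{\rho_0}\partial_y p' = h(t)G\sin\omega_f t$, $\partial_t v_z' + U_0\partial_x v_z' + \frac1{\rho_0}\partial_z p' = h(t)H\sin\omega_f t$, $\partial_t p' + U_0\partial_xp' + \rho_0c_0^2(\partial_xv_x'+\partial_yv_y'+\partial_zv_z') = h(t)P\sin\omega_f t$. Phase space $Z_2$: fix real constants $k_i,l_i,m_i$ ($i=1,\dots,4$) with $k_1k_2k_3k_4\neq0$ and $\Delta = \frac{c_0\rho_0}{k_3k_4}[r_1(k_2k_3k_4+k_3m_2m_4+k_4l_2l_3) + r_2(k_1k_3k_4+k_3m_1m_4+k_4l_1l_3)]\neq0$, $r_i=\sqrt{k_i^2+l_i^2+m_i^2}$. With $\xi_i=k_ix+l_iy+m_iz$, $Z_2$ is the set of systems $(F,G,H,P)$ of bounded $C^1$ functions on $\mathbb{R}^3$ of the form $F = k_1f_1(\xi_1)+k_2f_2(\xi_2)+\frac{l_3}{k_3}f_3(\xi_3)+\frac{m_4}{k_4}f_4(\xi_4)$,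 $G = l_1f_1(\xi_1)+l_2f_2(\xi_2)-f_3(\xi_3)$, $H = m_1f_1(\xi_1)+m_2f_2(\xi_2)-f_4(\xi_4)$, $P = -c_0\rho_0r_1f_1(\xi_1)+c_0\rho_0r_2f_2(\xi_2)$ with $f_i$ continuously differentiable, normed by $\|A\|_{Z_2}=\max\{\sup|F|,\sup|G|,\sup|H|,\sup|P|\}$. Well-posedness on $[0,t_0]$: (a) for every $A\in Z_2$ there is a unique solution defined for $t\in[0,t_0]$; (b) if $A_n\to A$ in $Z_2$ then the corresponding solutions converge in $Z_2$ to the solution for $A$ at every $t\in[0,t_0]$. The null solution is stable if the problem is well posed on $[0,t_0]$ for every $t_0>0$ and for every $\varepsilon>0$ there is $\eta>0$ such that $\|A\|_{Z_2}<\eta$ implies that the solution has $Z_2$-norm $<\varepsilon$ for all $t\ge0$; unstable means not stable. *)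

theory Defs
  imports "HOL-Analysis.Analysis"
begin

text \<open>Scalar fields on R^3 (curried in x y z) and amplitude / state systems (F,G,H,P),
  resp. (v_x', v_y', v_z', p').  The constants k_i, l_i, m_i (i = 1..4) are given as
  functions k l m :: nat => real, only the values at 1..4 being used.\<close>

type_synonym field3 = "real \<Rightarrow> real \<Rightarrow> real \<Rightarrow> real"
type_synonym amp = "field3 \<times> field3 \<times> field3 \<times> field3"

definition cmp :: "amp \<Rightarrow> nat \<Rightarrow> field3" where
  "cmp A j = (if j = 0 then fst A else if j = 1 then fst (snd A)
              else if j = 2 then fst (snd (snd A)) else snd (snd (snd A)))"

definition rr :: "(nat \<Rightarrow> real) \<Rightarrow> (nat \<Rightarrow> real) \<Rightarrow> (nat \<Rightarrow> real) \<Rightarrow> nat \<Rightarrow> real" where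
  "rr k l m i = sqrt ((k i)\<^sup>2 + (l i)\<^sup>2 + (m i)\<^sup>2)"

definition Delta :: "real \<Rightarrow> real \<Rightarrow> (nat \<Rightarrow> real) \<Rightarrow> (nat \<Rightarrow> real) \<Rightarrow> (nat \<Rightarrow> real) \<Rightarrow> real" where
  "Delta c0 rho0 k l m = c0 * rho0 / (k 3 * k 4) *
     (rr k l m 1 * (k 2 * k 3 * k 4 + k 3 * m 2 * m 4 + k 4 * l 2 * l 3)
    + rr k l m 2 * (k 1 * k 3 * k 4 + k 3 * m 1 * m 4 + k 4 * l 1 * l 3))"

definition xi :: "(nat \<Rightarrow> real) \<Rightarrow> (nat \<Rightarrow> real) \<Rightarrow> (nat \<Rightarrow> real) \<Rightarrow> nat \<Rightarrow> field3" where
  "xi k l m i x y z = k i * x + l i * y + m i * z"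

definition bounded3 :: "field3 \<Rightarrow> bool" where
  "bounded3 g \<longleftrightarrow> (\<exists>B. \<forall>x y z. \<bar>g x y z\<bar> \<le> B)"

definition inZ2 :: "real \<Rightarrow> real \<Rightarrow> (nat \<Rightarrow> real) \<Rightarrow> (nat \<Rightarrow> real) \<Rightarrow> (nat \<Rightarrow> real) \<Rightarrow> amp \<Rightarrow> bool" where
  "inZ2 c0 rho0 k l m A \<longleftrightarrow>
     (\<exists>f :: nat \<Rightarrow> real \<Rightarrow> real.
        (\<forall>i\<in>{1..4}. f i C1_differentiable_on UNIV) \<and>
        A = ((\<lambda>x y z. k 1 * f 1 (xi k l m 1 x y z) + k 2 * f 2 (xi k l m 2 x y z)
                      + l 3 / k 3 * f 3 (xi k l m 3 x y z) + m 4 / k 4 * f 4 (xi k l m 4 x y z)),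
             (\<lambda>x y z. l 1 * f 1 (xi k l m 1 x y z) + l 2 * f 2 (xi k l m 2 x y z)
                      - f 3 (xi k l m 3 x y z)),
             (\<lambda>x y z. m 1 * f 1 (xi k l m 1 x y z) + m 2 * f 2 (xi k l m 2 x y z)
                      - f 4 (xi k l m 4 x y z)),
             (\<lambda>x y z. - c0 * rho0 * rr k l m 1 * f 1 (xi k l m 1 x y z)
                      + c0 * rho0 * rr k l m 2 * f 2 (xi k l m 2 x y z)))) \<and>
     (\<forall>j<4. bounded3 (cmp A j))"

definition supn :: "field3 \<Rightarrow> real" where
  "supn g = Sup {\<bar>g x y z\<bar> | x y z. True}"

definition z2norm :: "amp \<Rightarrow> real" where
  "z2norm A = max (max (supn (cmp A 0)) (supn (cmp A 1))) (max (supn (cmp A 2)) (supn (cmp A 3)))"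

definition amp_minus :: "amp \<Rightarrow> amp \<Rightarrow> amp" where
  "amp_minus A B = ((\<lambda>x y z. cmp A 0 x y z - cmp B 0 x y z), (\<lambda>x y z. cmp A 1 x y z - cmp B 1 x y z),
                    (\<lambda>x y z. cmp A 2 x y z - cmp B 2 x y z), (\<lambda>x y z. cmp A 3 x y z - cmp B 3 x y z))"

definition amp_zero :: amp where
  "amp_zero = ((\<lambda>x y z. 0), (\<lambda>x y z. 0), (\<lambda>x y z. 0), (\<lambda>x y z. 0))"

definition dT :: "(real \<Rightarrow> amp) \<Rightarrow> nat \<Rightarrow> real \<Rightarrow> field3" where
  "dT u j t x y z = deriv (\<lambda>s. cmp (u s) j x y z) t"
definition dX :: "(real \<Rightarrow> amp) \<Rightarrow> nat \<Rightarrow> real \<Rightarrow> field3" where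
  "dX u j t x y z = deriv (\<lambda>s. cmp (u t) j s y z) x"
definition dY :: "(real \<Rightarrow> amp) \<Rightarrow> nat \<Rightarrow> real \<Rightarrow> field3" where
  "dY u j t x y z = deriv (\<lambda>s. cmp (u t) j x s z) y"
definition dZ :: "(real \<Rightarrow> amp) \<Rightarrow> nat \<Rightarrow> real \<Rightarrow> field3" where
  "dZ u j t x y z = deriv (\<lambda>s. cmp (u t) j x y s) z"

definition uncurry4 :: "(real \<Rightarrow> field3) \<Rightarrow> real \<times> real \<times> real \<times> real \<Rightarrow> real" where
  "uncurry4 w p = w (fst p) (fst (snd p)) (fst (snd (snd p))) (snd (snd (snd p)))"

text \<open>Classical (C^1) solution on [0,t0] of the problem with amplitude A, vanishing for t <= 0,
  whose state lies in Z_2 at every time t in [0,t0].  The Heaviside factor h(t) equals 1 for t > 0.\<close>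
definition is_solution ::
  "real \<Rightarrow> real \<Rightarrow> real \<Rightarrow> real \<Rightarrow> (nat \<Rightarrow> real) \<Rightarrow> (nat \<Rightarrow> real) \<Rightarrow> (nat \<Rightarrow> real)
   \<Rightarrow> real \<Rightarrow> amp \<Rightarrow> (real \<Rightarrow> amp) \<Rightarrow> bool" where
  "is_solution U0 c0 rho0 \<omega> k l m t0 A u \<longleftrightarrow>
     (\<forall>t\<le>0. u t = amp_zero) \<and>
     (\<forall>t\<in>{0..t0}. inZ2 c0 rho0 k l m (u t)) \<and>
     (\<forall>j<4.
        continuous_on ({..t0} \<times> UNIV) (uncurry4 (\<lambda>t. cmp (u t) j)) \<and>
        (\<forall>t\<in>{0<..<t0}. \<forall>x y z.
            (\<lambda>s. cmp (u s) j x y z) differentiable (at t) \<and>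
            (\<lambda>s. cmp (u t) j s y z) differentiable (at x) \<and>
            (\<lambda>s. cmp (u t) j x s z) differentiable (at y) \<and>
            (\<lambda>s. cmp (u t) j x y s) differentiable (at z)) \<and>
        continuous_on ({0<..<t0} \<times> UNIV) (uncurry4 (dT u j)) \<and>
        continuous_on ({0<..<t0} \<times> UNIV) (uncurry4 (dX u j)) \<and>
        continuous_on ({0<..<t0} \<times> UNIV) (uncurry4 (dY u j)) \<and>
        continuous_on ({0<..<t0} \<times> UNIV) (uncurry4 (dZ u j))) \<and>
     (\<forall>t\<in>{0<..<t0}. \<forall>x y z.
        dT u 0 t x y z + U0 * dX u 0 t x y z + 1 / rho0 * dX u 3 t x y z
          = cmp A 0 x y z * sin (\<omega> * t) \<and>
        dT u 1 t x y z + U0 * dX u 1 t x y z + 1 / rho0 * dY u 3 t x y z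
          = cmp A 1 x y z * sin (\<omega> * t) \<and>
        dT u 2 t x y z + U0 * dX u 2 t x y z + 1 / rho0 * dZ u 3 t x y z
          = cmp A 2 x y z * sin (\<omega> * t) \<and>
        dT u 3 t x y z + U0 * dX u 3 t x y z
          + rho0 * c0\<^sup>2 * (dX u 0 t x y z + dY u 1 t x y z + dZ u 2 t x y z)
          = cmp A 3 x y z * sin (\<omega> * t))"

definition well_posed ::
  "real \<Rightarrow> real \<Rightarrow> real \<Rightarrow> real \<Rightarrow> (nat \<Rightarrow> real) \<Rightarrow> (nat \<Rightarrow> real) \<Rightarrow> (nat \<Rightarrow> real) \<Rightarrow> real \<Rightarrow> bool" where
  "well_posed U0 c0 rho0 \<omega> k l m t0 \<longleftrightarrow>
     (\<forall>A. inZ2 c0 rho0 k l m A \<longrightarrow>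
        (\<exists>u. is_solution U0 c0 rho0 \<omega> k l m t0 A u) \<and>
        (\<forall>u v. is_solution U0 c0 rho0 \<omega> k l m t0 A u \<longrightarrow> is_solution U0 c0 rho0 \<omega> k l m t0 A v
               \<longrightarrow> (\<forall>t\<le>t0. u t = v t))) \<and>
     (\<forall>As A us u. (\<forall>n. inZ2 c0 rho0 k l m (As n)) \<longrightarrow> inZ2 c0 rho0 k l m A \<longrightarrow>
        (\<lambda>n. z2norm (amp_minus (As n) A)) \<longlonglongrightarrow> 0 \<longrightarrow>
        (\<forall>n. is_solution U0 c0 rho0 \<omega> k l m t0 (As n) (us n)) \<longrightarrow>
        is_solution U0 c0 rho0 \<omega> k l m t0 A u \<longrightarrow>
        (\<forall>t\<in>{0..t0}. (\<lambda>n. z2norm (amp_minus (us n t) (u t))) \<longlonglongrightarrow> 0))"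

definition null_stable ::
  "real \<Rightarrow> real \<Rightarrow> real \<Rightarrow> real \<Rightarrow> (nat \<Rightarrow> real) \<Rightarrow> (nat \<Rightarrow> real) \<Rightarrow> (nat \<Rightarrow> real) \<Rightarrow> bool" where
  "null_stable U0 c0 rho0 \<omega> k l m \<longleftrightarrow>
     (\<forall>t0>0. well_posed U0 c0 rho0 \<omega> k l m t0) \<and>
     (\<forall>\<epsilon>>0. \<exists>\<eta>>0. \<forall>A. inZ2 c0 rho0 k l m A \<longrightarrow> z2norm A < \<eta> \<longrightarrow>
        (\<forall>t0>0. \<forall>u. is_solution U0 c0 rho0 \<omega> k l m t0 A u \<longrightarrow>
           (\<forall>t\<in>{0..t0}. z2norm (u t) < \<epsilon>)))"

end

theory Submission
  imports Defs
begin


lemma antider: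
  fixes g :: "real \<Rightarrow> real"
  assumes "continuous_on UNIV g"
  shows "\<exists>P. \<forall>x. (P has_real_derivative g x) (at x)"
proof -
  have "((\<lambda>u. interval_lebesgue_integral lborel (ereal 0) (ereal u) g) has_real_derivative g x) (at x)" for x
  proof -
    have "((\<lambda>u. interval_lebesgue_integral lborel (ereal 0) (ereal u) g) has_vector_derivative g x) (at x within {min 0 x - 1..max 0 x + 1})"
      by (rule interval_integral_FTC2[where a="min 0 x - 1" and b="max 0 x + 1" and c=0]) (auto intro: continuous_on_subset[OF assms])
    moreover have "at x within {min 0 x - 1..max 0 x + 1} = at x"
      by (rule at_within_Icc_at) auto
    ultimately show ?thesis by (simp add: has_real_derivative_iff_has_vector_derivative)
  qed
  then show ?thesis by blast
qed

lemma transport_bound: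
  fixes h Ht Hs :: "real \<Rightarrow> real \<Rightarrow> real"
  assumes tt: "0 \<le> t" "t \<le> t0"
  and cont: "continuous_on ({0..t0} \<times> UNIV) (\<lambda>p. h (fst p) (snd p))"
  and h0: "\<And>s. h 0 s = 0"
  and dt: "\<And>\<tau> s. 0 < \<tau> \<Longrightarrow> \<tau> < t0 \<Longrightarrow> ((\<lambda>\<tau>. h \<tau> s) has_real_derivative Ht \<tau> s) (at \<tau>)"
  and ds: "\<And>\<tau> s. 0 < \<tau> \<Longrightarrow> \<tau> < t0 \<Longrightarrow> ((\<lambda>s. h \<tau> s) has_real_derivative Hs \<tau> s) (at s)"
  and ctt: "continuous_on ({0<..<t0} \<times> UNIV) (\<lambda>p. Ht (fst p) (snd p))"
  and bd: "\<And>\<tau> s. 0 < \<tau> \<Longrightarrow> \<tau> < t0 \<Longrightarrow> \<bar>Ht \<tau> s + c * Hs \<tau> s\<bar> \<le> B"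
  shows "\<bar>h t s\<bar> \<le> B * t"
proof (cases "t = 0")
  case True then show ?thesis by (simp add: h0)
next
  case False
  with tt have tpos: "0 < t" by simp
  define \<psi> where "\<psi> \<tau> = h \<tau> (s - c * (t - \<tau>))" for \<tau>
  have jd: "((\<lambda>(x, y). h y x) has_derivative (\<lambda>(tx, ty). Hs \<tau> \<sigma> * tx + Ht \<tau> \<sigma> * ty)) (at (\<sigma>, \<tau>))"
    if "0 < \<tau>" "\<tau> < t0" for \<tau> \<sigma>
  proof -
    have c2: "continuous_on (UNIV \<times> {0<..<t0}) (\<lambda>(x, y). Ht y x)"
    proof -
      have "continuous_on (UNIV \<times> {0<..<t0}) ((\<lambda>p. Ht (fst p) (snd p)) \<circ> (\<lambda>(x, y). (y, x)))"
        by (rule continuous_on_compose) (auto intro!: continuous_intros continuous_on_subset[OF ctt] simp: case_prod_unfold)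
      then show ?thesis by (simp add: o_def case_prod_unfold)
    qed
    have c3: "continuous_on (UNIV \<times> {0<..<t0}) (\<lambda>(x, y). blinfun_mult_right (Ht y x))"
    proof -
      have "continuous_on (UNIV \<times> {0<..<t0}) (blinfun_mult_right \<circ> (\<lambda>(x, y). Ht y x))"
        by (rule continuous_on_compose[OF c2]) (intro linear_continuous_on bounded_linear_blinfun_mult_right)
      then show ?thesis by (simp add: o_def case_prod_unfold)
    qed
    have "((\<lambda>(x, y). h y x) has_derivative (\<lambda>(tx, ty). (*) (Hs \<tau> \<sigma>) tx + blinfun_apply (blinfun_mult_right (Ht \<tau> \<sigma>)) ty))
        (at (\<sigma>, \<tau>) within UNIV \<times> {0<..<t0})"
    proof (rule has_derivative_partialsI)
      show "((\<lambda>x. h \<tau> x) has_derivative (*) (Hs \<tau> \<sigma>)) (at \<sigma> within UNIV)"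
        using ds[OF that] by (simp add: has_field_derivative_def)
      show "((\<lambda>y. h y x) has_derivative blinfun_apply (blinfun_mult_right (Ht y x))) (at y within {0<..<t0})"
        if "x \<in> UNIV" "y \<in> {0<..<t0}" for x y
        using dt[of y x] that by (auto simp: has_field_derivative_def intro: has_derivative_at_withinI)
      show "continuous (at (\<sigma>, \<tau>) within UNIV \<times> {0<..<t0}) (\<lambda>(x, y). blinfun_mult_right (Ht y x))"
        using c3 that by (simp add: continuous_on_eq_continuous_within)
    qed (use that in auto)
    moreover have "at (\<sigma>, \<tau>) within UNIV \<times> {0<..<t0} = at (\<sigma>, \<tau>)"
      by (rule at_within_open) (use that in \<open>auto intro: open_Times\<close>)
    ultimately show ?thesis by (simp add: case_prod_unfold)
  qed
  have dpsi: "(\<psi> has_derivative (\<lambda>a. (Hs x (s - c * (t - x)) * c + Ht x (s - c * (t - x))) * a)) (at x)"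
    if "0 < x" "x < t" for x
  proof -
    have g: "((\<lambda>\<tau>. (s - c * (t - \<tau>), \<tau>)) has_derivative (\<lambda>a. (c * a, a))) (at x)"
      by (auto intro!: derivative_eq_intros)
    have "((\<lambda>\<tau>. (\<lambda>(x, y). h y x) (s - c * (t - \<tau>), \<tau>)) has_derivative
         (\<lambda>a. (\<lambda>(tx, ty). Hs x (s - c * (t - x)) * tx + Ht x (s - c * (t - x)) * ty) (c * a, a))) (at x)"
      by (rule has_derivative_compose[OF g jd]) (use that tt in auto)
    then show ?thesis unfolding \<psi>_def by (simp add: algebra_simps)
  qed
  have cpsi: "continuous_on {0..t} \<psi>"
  proof -
    have "continuous_on {0..t} ((\<lambda>p. h (fst p) (snd p)) \<circ> (\<lambda>\<tau>. (\<tau>, s - c * (t - \<tau>))))"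
      apply (rule continuous_on_compose)
         apply (auto intro!: continuous_intros)
        apply (rule continuous_on_subset[OF cont])
        using tt by auto
    then show ?thesis by (simp add: \<psi>_def o_def)
  qed
  obtain x where x: "x \<in> {0<..<t}" and
     le: "norm (\<psi> t - \<psi> 0) \<le> norm ((Hs x (s - c * (t - x)) * c + Ht x (s - c * (t - x))) * (t - 0))"
    using mvt_general[OF tpos cpsi dpsi] by blast
  have "\<bar>Hs x (s - c * (t - x)) * c + Ht x (s - c * (t - x))\<bar> \<le> B"
    using bd[of x "s - c * (t - x)"] x tt by (simp add: algebra_simps)
  then have "\<bar>(Hs x (s - c * (t - x)) * c + Ht x (s - c * (t - x))) * t\<bar> \<le> B * t"
    using tpos by (simp add: abs_mult mult_right_mono)
  moreover have "\<psi> t = h t s" "\<psi> 0 = 0" by (simp_all add: \<psi>_def h0)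
  ultimately show ?thesis using le by simp
qed




locale wp =
  fixes U0 c0 rho0 \<omega> :: real and k l m :: "nat \<Rightarrow> real"
  assumes U0pos: "U0 > 0" and c0pos: "c0 > 0" and rho0pos: "rho0 > 0" and om: "\<omega> \<noteq> 0"
    and kne: "k 1 * k 2 * k 3 * k 4 \<noteq> 0" and Dne: "Delta c0 rho0 k l m \<noteq> 0"
begin

abbreviation "r \<equiv> rr k l m"

lemma k1: "k 1 \<noteq> 0" and k2: "k 2 \<noteq> 0" and k3: "k 3 \<noteq> 0" and k4: "k 4 \<noteq> 0"
  using kne by auto

lemma r_sq: "r i * r i = (k i)\<^sup>2 + (l i)\<^sup>2 + (m i)\<^sup>2"
  unfolding rr_def by (metis abs_of_nonneg add_nonneg_nonneg real_sqrt_mult_self zero_le_power2)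

lemma r_sq2: "(r i)\<^sup>2 = (k i)\<^sup>2 + (l i)\<^sup>2 + (m i)\<^sup>2"
  using r_sq by (simp add: power2_eq_square)

definition ev :: "nat \<Rightarrow> nat \<Rightarrow> real" where
  "ev i j = (if i = 1 then (if j = 0 then k 1 else if j = 1 then l 1 else if j = 2 then m 1 else - c0 * rho0 * r 1)
       else if i = 2 then (if j = 0 then k 2 else if j = 1 then l 2 else if j = 2 then m 2 else c0 * rho0 * r 2)
       else if i = 3 then (if j = 0 then l 3 / k 3 else if j = 1 then -1 else 0)
       else (if j = 0 then m 4 / k 4 else if j = 2 then -1 else 0))"

definition cs :: "nat \<Rightarrow> real" where
  "cs i = (if i = 1 then U0 * k 1 - c0 * r 1 else if i = 2 then U0 * k 2 + c0 * r 2 else U0 * k i)"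

definition beta :: "nat \<Rightarrow> real" where
  "beta i = k i + l i * l 3 / k 3 + m i * m 4 / k 4"

definition DD :: real where "DD = c0 * rho0 * (beta 1 * r 2 + beta 2 * r 1)"

lemma DD_eq: "DD = Delta c0 rho0 k l m"
  unfolding DD_def Delta_def beta_def using k3 k4 by (simp add: divide_simps) (simp add: algebra_simps)

lemma DD_ne: "DD \<noteq> 0" using DD_eq Dne by simp

definition pwa :: "nat \<Rightarrow> nat \<Rightarrow> real" where
  "pwa i j = (if i = 1 then (if j = 0 then c0 * rho0 * r 2 / DD else if j = 1 then c0 * rho0 * r 2 / DD * (l 3 / k 3)
                 else if j = 2 then c0 * rho0 * r 2 / DD * (m 4 / k 4) else - beta 2 / DD)
       else (if j = 0 then c0 * rho0 * r 1 / DD else if j = 1 then c0 * rho0 * r 1 / DD * (l 3 / k 3)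
                 else if j = 2 then c0 * rho0 * r 1 / DD * (m 4 / k 4) else beta 1 / DD))"

definition pw :: "nat \<Rightarrow> nat \<Rightarrow> real" where
  "pw i j = (if i = 1 then pwa 1 j else if i = 2 then pwa 2 j
       else if i = 3 then l 1 * pwa 1 j + l 2 * pwa 2 j - (if j = 1 then 1 else 0)
       else m 1 * pwa 1 j + m 2 * pwa 2 j - (if j = 2 then 1 else 0))"

definition pv :: "nat \<Rightarrow> real \<Rightarrow> real \<Rightarrow> real \<Rightarrow> real \<Rightarrow> real" where
  "pv i a0 a1 a2 a3 = pw i 0 * a0 + pw i 1 * a1 + pw i 2 * a2 + pw i 3 * a3"

definition vec4 :: "(nat \<Rightarrow> real) \<Rightarrow> nat \<Rightarrow> real" where
  "vec4 d j = ev 1 j * d 1 + ev 2 j * d 2 + ev 3 j * d 3 + ev 4 j * d 4"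

lemma Q_vec4: "vec4 d 0 + l 3 / k 3 * vec4 d 1 + m 4 / k 4 * vec4 d 2 = beta 1 * d 1 + beta 2 * d 2"
  unfolding vec4_def ev_def beta_def using k3 k4 by (simp add: divide_simps) (simp add: algebra_simps)

lemma P_vec4: "vec4 d 3 = - c0 * rho0 * r 1 * d 1 + c0 * rho0 * r 2 * d 2"
  unfolding vec4_def ev_def by simp

lemma pwa1: "pwa 1 0 * a0 + pwa 1 1 * a1 + pwa 1 2 * a2 + pwa 1 3 * a3
   = (c0 * rho0 * r 2 * (a0 + l 3 / k 3 * a1 + m 4 / k 4 * a2) - beta 2 * a3) / DD"
  unfolding pwa_def using DD_ne by (simp add: divide_simps k3 k4) (simp add: algebra_simps)

lemma pwa2: "pwa 2 0 * a0 + pwa 2 1 * a1 + pwa 2 2 * a2 + pwa 2 3 * a3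
   = (c0 * rho0 * r 1 * (a0 + l 3 / k 3 * a1 + m 4 / k 4 * a2) + beta 1 * a3) / DD"
  unfolding pwa_def using DD_ne by (simp add: divide_simps k3 k4) (simp add: algebra_simps)

lemma pv1_vec4: "pwa 1 0 * vec4 d 0 + pwa 1 1 * vec4 d 1 + pwa 1 2 * vec4 d 2 + pwa 1 3 * vec4 d 3 = d 1"
  unfolding pwa1 Q_vec4 P_vec4 using DD_ne by (simp add: divide_simps DD_def) (simp add: algebra_simps)

lemma pv2_vec4: "pwa 2 0 * vec4 d 0 + pwa 2 1 * vec4 d 1 + pwa 2 2 * vec4 d 2 + pwa 2 3 * vec4 d 3 = d 2"
  unfolding pwa2 Q_vec4 P_vec4 using DD_ne by (simp add: divide_simps DD_def) (simp add: algebra_simps)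

lemma pv_vec4: "i \<in> {1..4} \<Longrightarrow> pv i (vec4 d 0) (vec4 d 1) (vec4 d 2) (vec4 d 3) = d i"
proof -
  assume i: "i \<in> {1..4}"
  have v1: "vec4 d 1 = l 1 * d 1 + l 2 * d 2 - d 3" and v2: "vec4 d 2 = m 1 * d 1 + m 2 * d 2 - d 4"
    unfolding vec4_def ev_def by simp_all
  have "i = 1 \<or> i = 2 \<or> i = 3 \<or> i = 4" using i by auto
  then show ?thesis
  proof (elim disjE)
    assume "i = 1" then show ?thesis using pv1_vec4 by (simp add: pv_def pw_def)
  next
    assume "i = 2" then show ?thesis using pv2_vec4 by (simp add: pv_def pw_def)
  next
    assume "i = 3"
    then have "pv i (vec4 d 0) (vec4 d 1) (vec4 d 2) (vec4 d 3)
      = l 1 * (pwa 1 0 * vec4 d 0 + pwa 1 1 * vec4 d 1 + pwa 1 2 * vec4 d 2 + pwa 1 3 * vec4 d 3)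
      + l 2 * (pwa 2 0 * vec4 d 0 + pwa 2 1 * vec4 d 1 + pwa 2 2 * vec4 d 2 + pwa 2 3 * vec4 d 3) - vec4 d 1"
      by (simp add: pv_def pw_def algebra_simps)
    also have "\<dots> = d 3" by (simp only: pv1_vec4 pv2_vec4) (simp add: vec4_def ev_def)
    finally show ?thesis using \<open>i = 3\<close> by simp
  next
    assume "i = 4"
    then have "pv i (vec4 d 0) (vec4 d 1) (vec4 d 2) (vec4 d 3)
      = m 1 * (pwa 1 0 * vec4 d 0 + pwa 1 1 * vec4 d 1 + pwa 1 2 * vec4 d 2 + pwa 1 3 * vec4 d 3)
      + m 2 * (pwa 2 0 * vec4 d 0 + pwa 2 1 * vec4 d 1 + pwa 2 2 * vec4 d 2 + pwa 2 3 * vec4 d 3) - vec4 d 2"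
      by (simp add: pv_def pw_def algebra_simps)
    also have "\<dots> = d 4" by (simp only: pv1_vec4 pv2_vec4) (simp add: vec4_def ev_def)
    finally show ?thesis using \<open>i = 4\<close> by simp
  qed
qed

lemma spatial0: "U0 * vec4 (\<lambda>i. k i * d i) 0 + 1 / rho0 * vec4 (\<lambda>i. k i * d i) 3 = vec4 (\<lambda>i. cs i * d i) 0"
  unfolding vec4_def ev_def cs_def using k3 k4 rho0pos by (simp add: divide_simps) (simp add: algebra_simps)

lemma spatial1: "U0 * vec4 (\<lambda>i. k i * d i) 1 + 1 / rho0 * vec4 (\<lambda>i. l i * d i) 3 = vec4 (\<lambda>i. cs i * d i) 1"
  unfolding vec4_def ev_def cs_def using k3 k4 rho0pos by (simp add: divide_simps) (simp add: algebra_simps)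

lemma spatial2: "U0 * vec4 (\<lambda>i. k i * d i) 2 + 1 / rho0 * vec4 (\<lambda>i. m i * d i) 3 = vec4 (\<lambda>i. cs i * d i) 2"
  unfolding vec4_def ev_def cs_def using k3 k4 rho0pos by (simp add: divide_simps) (simp add: algebra_simps)

lemma spatial3: "U0 * vec4 (\<lambda>i. k i * d i) 3 + rho0 * c0\<^sup>2 * (vec4 (\<lambda>i. k i * d i) 0 + vec4 (\<lambda>i. l i * d i) 1 + vec4 (\<lambda>i. m i * d i) 2)
   = vec4 (\<lambda>i. cs i * d i) 3"
proof -
  have "vec4 (\<lambda>i. k i * d i) 0 + vec4 (\<lambda>i. l i * d i) 1 + vec4 (\<lambda>i. m i * d i) 2 = r 1 * r 1 * d 1 + r 2 * r 2 * d 2"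
    unfolding vec4_def ev_def r_sq by (simp add: divide_simps k3 k4) (simp add: algebra_simps power2_eq_square)
  then show ?thesis
    unfolding vec4_def ev_def cs_def by (simp add: algebra_simps power2_eq_square)
qed

lemma pv_add: "pv i (a0 + b0) (a1 + b1) (a2 + b2) (a3 + b3) = pv i a0 a1 a2 a3 + pv i b0 b1 b2 b3"
  unfolding pv_def by (simp add: algebra_simps)

lemma pv_diff: "pv i (a0 - b0) (a1 - b1) (a2 - b2) (a3 - b3) = pv i a0 a1 a2 a3 - pv i b0 b1 b2 b3"
  unfolding pv_def by (simp add: algebra_simps)

lemma pv_scale: "pv i (a0 * c) (a1 * c) (a2 * c) (a3 * c) = pv i a0 a1 a2 a3 * c"
  unfolding pv_def by (simp add: algebra_simps)

lemma pv_zero: "pv i 0 0 0 0 = 0" unfolding pv_def by simp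

definition KP :: real where "KP = (\<Sum>i\<in>{1..4}. \<bar>pw i 0\<bar> + \<bar>pw i 1\<bar> + \<bar>pw i 2\<bar> + \<bar>pw i 3\<bar>)"

lemma pv_bound:
  assumes "i \<in> {1..4}" "\<bar>a0\<bar> \<le> M" "\<bar>a1\<bar> \<le> M" "\<bar>a2\<bar> \<le> M" "\<bar>a3\<bar> \<le> M"
  shows "\<bar>pv i a0 a1 a2 a3\<bar> \<le> KP * M"
proof -
  have M: "0 \<le> M" using assms(2) by linarith
  have "\<bar>pv i a0 a1 a2 a3\<bar> \<le> \<bar>pw i 0\<bar> * M + \<bar>pw i 1\<bar> * M + \<bar>pw i 2\<bar> * M + \<bar>pw i 3\<bar> * M"
  proof -
    have "\<bar>pw i j * a\<bar> \<le> \<bar>pw i j\<bar> * M" if "\<bar>a\<bar> \<le> M" for j a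
      by (simp add: abs_mult mult_left_mono that)
    then have e: "\<bar>pw i 0 * a0\<bar> \<le> \<bar>pw i 0\<bar> * M" "\<bar>pw i 1 * a1\<bar> \<le> \<bar>pw i 1\<bar> * M"
      "\<bar>pw i 2 * a2\<bar> \<le> \<bar>pw i 2\<bar> * M" "\<bar>pw i 3 * a3\<bar> \<le> \<bar>pw i 3\<bar> * M" using assms by auto
    show ?thesis unfolding pv_def using e by linarith
  qed
  also have "\<dots> = (\<bar>pw i 0\<bar> + \<bar>pw i 1\<bar> + \<bar>pw i 2\<bar> + \<bar>pw i 3\<bar>) * M" by (simp add: algebra_simps)
  also have "\<dots> \<le> KP * M"
    unfolding KP_def
    by (rule mult_right_mono[OF member_le_sum[OF assms(1)] M]) auto
  finally show ?thesis .
qed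

definition KV :: real where "KV = (\<Sum>j<4. \<bar>ev 1 j\<bar> + \<bar>ev 2 j\<bar> + \<bar>ev 3 j\<bar> + \<bar>ev 4 j\<bar>)"

lemma vec4_bound:
  assumes "j < 4" "\<And>i. i \<in> {1..4} \<Longrightarrow> \<bar>d i\<bar> \<le> M"
  shows "\<bar>vec4 d j\<bar> \<le> KV * M"
proof -
  have b: "\<bar>d 1\<bar> \<le> M" "\<bar>d 2\<bar> \<le> M" "\<bar>d 3\<bar> \<le> M" "\<bar>d 4\<bar> \<le> M" using assms(2) by auto
  have M: "0 \<le> M" using b(1) by linarith
  have "\<bar>vec4 d j\<bar> \<le> \<bar>ev 1 j\<bar> * M + \<bar>ev 2 j\<bar> * M + \<bar>ev 3 j\<bar> * M + \<bar>ev 4 j\<bar> * M"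
  proof -
    have "\<bar>ev i j * a\<bar> \<le> \<bar>ev i j\<bar> * M" if "\<bar>a\<bar> \<le> M" for i a
      by (simp add: abs_mult mult_left_mono that)
    then have e: "\<bar>ev 1 j * d 1\<bar> \<le> \<bar>ev 1 j\<bar> * M" "\<bar>ev 2 j * d 2\<bar> \<le> \<bar>ev 2 j\<bar> * M"
      "\<bar>ev 3 j * d 3\<bar> \<le> \<bar>ev 3 j\<bar> * M" "\<bar>ev 4 j * d 4\<bar> \<le> \<bar>ev 4 j\<bar> * M" using b by auto
    show ?thesis unfolding vec4_def using e by linarith
  qed
  also have "\<dots> = (\<bar>ev 1 j\<bar> + \<bar>ev 2 j\<bar> + \<bar>ev 3 j\<bar> + \<bar>ev 4 j\<bar>) * M" by (simp add: algebra_simps)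
  also have "\<dots> \<le> KV * M"
    unfolding KV_def
    by (rule mult_right_mono[OF member_le_sum[of j]]) (use assms M in auto)
  finally show ?thesis .
qed

end



lemma cmp_simps: "cmp (a, b, c, d) 0 = a" "cmp (a, b, c, d) (Suc 0) = b" "cmp (a, b, c, d) 2 = c" "cmp (a, b, c, d) 3 = d"
  by (simp_all add: cmp_def)

lemma amp_eq_iff: "(A = (a, b, c, d)) \<longleftrightarrow> (cmp A 0 = a \<and> cmp A 1 = b \<and> cmp A 2 = c \<and> cmp A 3 = d)"
  by (cases A) (auto simp: cmp_def)

lemma amp_ext: "(\<And>j. j < 4 \<Longrightarrow> cmp A j = cmp B j) \<Longrightarrow> A = B"
proof -
  assume h: "\<And>j. j < 4 \<Longrightarrow> cmp A j = cmp B j"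
  obtain a b c d where B: "B = (a, b, c, d)" by (cases B) auto
  have "cmp A 0 = a" "cmp A 1 = b" "cmp A 2 = c" "cmp A 3 = d"
    using h[of 0] h[of 1] h[of 2] h[of 3] by (simp_all add: B cmp_def)
  then show ?thesis unfolding B amp_eq_iff by simp
qed

lemma cmp_zero: "cmp amp_zero j = (\<lambda>x y z. 0)"
  by (simp add: amp_zero_def cmp_def)

lemma cmp_minus: "cmp (amp_minus A B) j = (\<lambda>x y z. cmp A j x y z - cmp B j x y z)" if "j < 4"
proof -
  have "j = 0 \<or> j = 1 \<or> j = 2 \<or> j = 3" using that by auto
  then show ?thesis by (auto simp: amp_minus_def cmp_def)
qed

context wp begin

abbreviation "\<xi> \<equiv> xi k l m"

lemma inZ2_iff: "inZ2 c0 rho0 k l m A \<longleftrightarrow>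
  (\<exists>f. (\<forall>i\<in>{1..4}. f i C1_differentiable_on UNIV) \<and>
       (\<forall>j<4. cmp A j = (\<lambda>x y z. vec4 (\<lambda>i. f i (\<xi> i x y z)) j)) \<and> (\<forall>j<4. bounded3 (cmp A j)))"
proof -
  have e: "(\<forall>j<4. cmp A j = (\<lambda>x y z. vec4 (\<lambda>i. f i (\<xi> i x y z)) j)) \<longleftrightarrow>
     A = ((\<lambda>x y z. k 1 * f 1 (xi k l m 1 x y z) + k 2 * f 2 (xi k l m 2 x y z)
                      + l 3 / k 3 * f 3 (xi k l m 3 x y z) + m 4 / k 4 * f 4 (xi k l m 4 x y z)),
             (\<lambda>x y z. l 1 * f 1 (xi k l m 1 x y z) + l 2 * f 2 (xi k l m 2 x y z)
                      - f 3 (xi k l m 3 x y z)),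
             (\<lambda>x y z. m 1 * f 1 (xi k l m 1 x y z) + m 2 * f 2 (xi k l m 2 x y z)
                      - f 4 (xi k l m 4 x y z)),
             (\<lambda>x y z. - c0 * rho0 * rr k l m 1 * f 1 (xi k l m 1 x y z)
                      + c0 * rho0 * rr k l m 2 * f 2 (xi k l m 2 x y z)))" for f
  proof -
    have v: "(\<lambda>x y z. vec4 (\<lambda>i. f i (\<xi> i x y z)) 0) = (\<lambda>x y z. k 1 * f 1 (xi k l m 1 x y z) + k 2 * f 2 (xi k l m 2 x y z)
                      + l 3 / k 3 * f 3 (xi k l m 3 x y z) + m 4 / k 4 * f 4 (xi k l m 4 x y z))"
      "(\<lambda>x y z. vec4 (\<lambda>i. f i (\<xi> i x y z)) 1) = (\<lambda>x y z. l 1 * f 1 (xi k l m 1 x y z) + l 2 * f 2 (xi k l m 2 x y z)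
                      - f 3 (xi k l m 3 x y z))"
      "(\<lambda>x y z. vec4 (\<lambda>i. f i (\<xi> i x y z)) 2) = (\<lambda>x y z. m 1 * f 1 (xi k l m 1 x y z) + m 2 * f 2 (xi k l m 2 x y z)
                      - f 4 (xi k l m 4 x y z))"
      "(\<lambda>x y z. vec4 (\<lambda>i. f i (\<xi> i x y z)) 3) = (\<lambda>x y z. - c0 * rho0 * rr k l m 1 * f 1 (xi k l m 1 x y z)
                      + c0 * rho0 * rr k l m 2 * f 2 (xi k l m 2 x y z))"
      by (simp_all add: vec4_def ev_def fun_eq_iff)
    have "(\<forall>j<4. cmp A j = (\<lambda>x y z. vec4 (\<lambda>i. f i (\<xi> i x y z)) j)) \<longleftrightarrow>
      (cmp A 0 = (\<lambda>x y z. vec4 (\<lambda>i. f i (\<xi> i x y z)) 0) \<and> cmp A 1 = (\<lambda>x y z. vec4 (\<lambda>i. f i (\<xi> i x y z)) 1) \<and>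
       cmp A 2 = (\<lambda>x y z. vec4 (\<lambda>i. f i (\<xi> i x y z)) 2) \<and> cmp A 3 = (\<lambda>x y z. vec4 (\<lambda>i. f i (\<xi> i x y z)) 3))"
      by (auto simp: less_Suc_eq numeral_3_eq_3 numeral_2_eq_2 eval_nat_numeral)
    then show ?thesis unfolding amp_eq_iff v by simp
  qed
  show ?thesis unfolding inZ2_def e by blast
qed

definition PVf :: "nat \<Rightarrow> amp \<Rightarrow> real \<Rightarrow> real" where
  "PVf i B s = pv i (cmp B 0 (s / k i) 0 0) (cmp B 1 (s / k i) 0 0) (cmp B 2 (s / k i) 0 0) (cmp B 3 (s / k i) 0 0)"

lemma k_ne: "i \<in> {1..4} \<Longrightarrow> k i \<noteq> 0"
proof -
  assume "i \<in> {1..4}"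
  then have "i = 1 \<or> i = 2 \<or> i = 3 \<or> i = 4" by auto
  then show ?thesis using k1 k2 k3 k4 by auto
qed

lemma xi_axis: "i \<in> {1..4} \<Longrightarrow> \<xi> i (s / k i) 0 0 = s"
  using k_ne by (simp add: xi_def)

lemma PVf_witness:
  assumes "\<forall>j<4. cmp B j = (\<lambda>x y z. vec4 (\<lambda>i. f i (\<xi> i x y z)) j)" "i \<in> {1..4}"
  shows "PVf i B s = f i s"
proof -
  have "PVf i B s = pv i (vec4 (\<lambda>q. f q (\<xi> q (s / k i) 0 0)) 0) (vec4 (\<lambda>q. f q (\<xi> q (s / k i) 0 0)) 1)
        (vec4 (\<lambda>q. f q (\<xi> q (s / k i) 0 0)) 2) (vec4 (\<lambda>q. f q (\<xi> q (s / k i) 0 0)) 3)"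
    unfolding PVf_def using assms(1) by simp
  also have "\<dots> = f i (\<xi> i (s / k i) 0 0)" by (rule pv_vec4[OF assms(2)])
  finally show ?thesis using xi_axis[OF assms(2)] by simp
qed

lemma vec4_cong: "(\<And>i. i \<in> {1..4} \<Longrightarrow> d i = e i) \<Longrightarrow> vec4 d j = vec4 e j"
  unfolding vec4_def by simp

lemma recon:
  assumes "inZ2 c0 rho0 k l m B" "j < 4"
  shows "cmp B j x y z = vec4 (\<lambda>i. PVf i B (\<xi> i x y z)) j"
proof -
  obtain f where f: "\<forall>j<4. cmp B j = (\<lambda>x y z. vec4 (\<lambda>i. f i (\<xi> i x y z)) j)"
    using assms(1) unfolding inZ2_iff by blast
  have "cmp B j x y z = vec4 (\<lambda>i. f i (\<xi> i x y z)) j" using f assms(2) by simp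
  also have "\<dots> = vec4 (\<lambda>i. PVf i B (\<xi> i x y z)) j"
    by (rule vec4_cong) (simp add: PVf_witness[OF f])
  finally show ?thesis .
qed

lemma bounded3_bound: "bounded3 g \<Longrightarrow> \<exists>M. \<forall>x y z. \<bar>g x y z\<bar> \<le> M"
  unfolding bounded3_def by blast

lemma inZ2_bound:
  assumes "inZ2 c0 rho0 k l m B"
  shows "\<exists>M. \<forall>j<4. \<forall>x y z. \<bar>cmp B j x y z\<bar> \<le> M"
proof -
  have b: "\<forall>j<4. bounded3 (cmp B j)" using assms unfolding inZ2_def by blast
  obtain M0 M1 M2 M3 where "\<forall>x y z. \<bar>cmp B 0 x y z\<bar> \<le> M0" "\<forall>x y z. \<bar>cmp B 1 x y z\<bar> \<le> M1"
    "\<forall>x y z. \<bar>cmp B 2 x y z\<bar> \<le> M2" "\<forall>x y z. \<bar>cmp B 3 x y z\<bar> \<le> M3"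
    using b[rule_format, of 0] b[rule_format, of 1] b[rule_format, of 2] b[rule_format, of 3]
    unfolding bounded3_def by auto
  then have "\<forall>j<4. \<forall>x y z. \<bar>cmp B j x y z\<bar> \<le> max (max M0 M1) (max M2 M3)"
    by (auto simp: less_Suc_eq numeral_3_eq_3 numeral_2_eq_2 eval_nat_numeral) (smt (verit))+
  then show ?thesis by blast
qed

end



context wp begin

lemma vec4_deriv:
  assumes "\<And>i. i \<in> {1..4} \<Longrightarrow> \<forall>x. (f i has_real_derivative Df i x) (at x)"
  shows "((\<lambda>s. vec4 (\<lambda>i. f i (a i * s + b i)) j) has_real_derivative vec4 (\<lambda>i. a i * Df i (a i * x + b i)) j) (at x)"
proof -
  have d: "((\<lambda>s. f i (a i * s + b i)) has_real_derivative Df i (a i * x + b i) * a i) (at x)" if "i \<in> {1..4}" for i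
    by (rule DERIV_chain2[OF assms[OF that, rule_format]]) (auto intro!: derivative_eq_intros)
  have "((\<lambda>s. ev 1 j * f 1 (a 1 * s + b 1) + ev 2 j * f 2 (a 2 * s + b 2) + ev 3 j * f 3 (a 3 * s + b 3) + ev 4 j * f 4 (a 4 * s + b 4))
     has_real_derivative ev 1 j * (Df 1 (a 1 * x + b 1) * a 1) + ev 2 j * (Df 2 (a 2 * x + b 2) * a 2)
       + ev 3 j * (Df 3 (a 3 * x + b 3) * a 3) + ev 4 j * (Df 4 (a 4 * x + b 4) * a 4)) (at x)"
    by (intro DERIV_add DERIV_cmult d) auto
  then show ?thesis unfolding vec4_def by (simp add: algebra_simps)
qed

lemma C1_ders:
  assumes "\<forall>i\<in>{1..4}. f i C1_differentiable_on UNIV"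
  shows "\<exists>D. \<forall>i\<in>{1..4}. \<forall>x. (f i has_real_derivative D i x) (at x)"
proof -
  have "\<forall>i\<in>{1..4}. \<exists>Di. \<forall>x. (f i has_real_derivative Di x) (at x)"
    using assms unfolding C1_differentiable_on_def has_real_derivative_iff_has_vector_derivative by blast
  then show ?thesis by (rule bchoice)
qed

lemma Z2_partials:
  assumes f: "\<forall>j<4. cmp B j = (\<lambda>x y z. vec4 (\<lambda>i. f i (\<xi> i x y z)) j)"
    and Df: "\<And>i. i \<in> {1..4} \<Longrightarrow> \<forall>x. (f i has_real_derivative Df i x) (at x)" and j: "j < 4"
  shows "((\<lambda>s. cmp B j s y z) has_real_derivative vec4 (\<lambda>i. k i * Df i (\<xi> i x y z)) j) (at x)"
    and "((\<lambda>s. cmp B j x s z) has_real_derivative vec4 (\<lambda>i. l i * Df i (\<xi> i x y z)) j) (at y)"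
    and "((\<lambda>s. cmp B j x y s) has_real_derivative vec4 (\<lambda>i. m i * Df i (\<xi> i x y z)) j) (at z)"
proof -
  have c: "cmp B j = (\<lambda>x y z. vec4 (\<lambda>i. f i (\<xi> i x y z)) j)" using f j by simp
  have "((\<lambda>s. vec4 (\<lambda>i. f i (k i * s + (l i * y + m i * z))) j) has_real_derivative
        vec4 (\<lambda>i. k i * Df i (k i * x + (l i * y + m i * z))) j) (at x)"
    by (rule vec4_deriv[OF Df])
  then show "((\<lambda>s. cmp B j s y z) has_real_derivative vec4 (\<lambda>i. k i * Df i (\<xi> i x y z)) j) (at x)"
    unfolding c xi_def by (simp add: add.assoc)
  have "((\<lambda>s. vec4 (\<lambda>i. f i (l i * s + (k i * x + m i * z))) j) has_real_derivative
        vec4 (\<lambda>i. l i * Df i (l i * y + (k i * x + m i * z))) j) (at y)"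
    by (rule vec4_deriv[OF Df])
  then show "((\<lambda>s. cmp B j x s z) has_real_derivative vec4 (\<lambda>i. l i * Df i (\<xi> i x y z)) j) (at y)"
    unfolding c xi_def by (simp add: algebra_simps)
  have "((\<lambda>s. vec4 (\<lambda>i. f i (m i * s + (k i * x + l i * y))) j) has_real_derivative
        vec4 (\<lambda>i. m i * Df i (m i * z + (k i * x + l i * y))) j) (at z)"
    by (rule vec4_deriv[OF Df])
  then show "((\<lambda>s. cmp B j x y s) has_real_derivative vec4 (\<lambda>i. m i * Df i (\<xi> i x y z)) j) (at z)"
    unfolding c xi_def by (simp add: algebra_simps)
qed

definition hm :: "(real \<Rightarrow> amp) \<Rightarrow> nat \<Rightarrow> real \<Rightarrow> real \<Rightarrow> real" where
  "hm u i t s = PVf i (u t) s"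

definition Htm :: "(real \<Rightarrow> amp) \<Rightarrow> nat \<Rightarrow> real \<Rightarrow> real \<Rightarrow> real" where
  "Htm u i t s = pv i (dT u 0 t (s / k i) 0 0) (dT u 1 t (s / k i) 0 0) (dT u 2 t (s / k i) 0 0) (dT u 3 t (s / k i) 0 0)"

definition Hsm :: "(real \<Rightarrow> amp) \<Rightarrow> nat \<Rightarrow> real \<Rightarrow> real \<Rightarrow> real" where
  "Hsm u i t s = deriv (\<lambda>s. hm u i t s) s"

lemma cont_axis:
  assumes "continuous_on ({..t0} \<times> UNIV) (uncurry4 w)" "S \<subseteq> {..t0} \<times> UNIV"
  shows "continuous_on S (\<lambda>p. w (fst p) (snd p / c) 0 0)"
proof -
  have "continuous_on S (\<lambda>p. uncurry4 w (fst p, snd p / c, 0, 0))"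
    by (rule continuous_on_compose2[OF assms(1)]) (use assms(2) in \<open>auto simp: divide_inverse intro!: continuous_intros\<close>)
  then show ?thesis by (simp add: uncurry4_def)
qed

lemma cont_axis':
  assumes "continuous_on (A \<times> UNIV) (uncurry4 w)" "S \<subseteq> A \<times> UNIV"
  shows "continuous_on S (\<lambda>p. w (fst p) (snd p / c) 0 0)"
proof -
  have "continuous_on S (\<lambda>p. uncurry4 w (fst p, snd p / c, 0, 0))"
    by (rule continuous_on_compose2[OF assms(1)]) (use assms(2) in \<open>auto simp: divide_inverse intro!: continuous_intros\<close>)
  then show ?thesis by (simp add: uncurry4_def)
qed

context
  fixes t0 A u
  assumes sol: "is_solution U0 c0 rho0 \<omega> k l m t0 A u"
begin

lemma sol_zero: "t \<le> 0 \<Longrightarrow> u t = amp_zero" using sol unfolding is_solution_def by blast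
lemma sol_Z2: "t \<in> {0..t0} \<Longrightarrow> inZ2 c0 rho0 k l m (u t)" using sol unfolding is_solution_def by blast
lemma sol_cont: "j < 4 \<Longrightarrow> continuous_on ({..t0} \<times> UNIV) (uncurry4 (\<lambda>t. cmp (u t) j))"
  using sol unfolding is_solution_def by blast
lemma sol_difft: "j < 4 \<Longrightarrow> t \<in> {0<..<t0} \<Longrightarrow> (\<lambda>s. cmp (u s) j x y z) differentiable (at t)"
  using sol unfolding is_solution_def by blast
lemma sol_contT: "j < 4 \<Longrightarrow> continuous_on ({0<..<t0} \<times> UNIV) (uncurry4 (dT u j))"
  using sol unfolding is_solution_def by blast
lemma sol_pde: "t \<in> {0<..<t0} \<Longrightarrow>
        dT u 0 t x y z + U0 * dX u 0 t x y z + 1 / rho0 * dX u 3 t x y z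
          = cmp A 0 x y z * sin (\<omega> * t) \<and>
        dT u 1 t x y z + U0 * dX u 1 t x y z + 1 / rho0 * dY u 3 t x y z
          = cmp A 1 x y z * sin (\<omega> * t) \<and>
        dT u 2 t x y z + U0 * dX u 2 t x y z + 1 / rho0 * dZ u 3 t x y z
          = cmp A 2 x y z * sin (\<omega> * t) \<and>
        dT u 3 t x y z + U0 * dX u 3 t x y z
          + rho0 * c0\<^sup>2 * (dX u 0 t x y z + dY u 1 t x y z + dZ u 2 t x y z)
          = cmp A 3 x y z * sin (\<omega> * t)"
  using sol unfolding is_solution_def by blast

lemma hm_cont: "continuous_on ({0..t0} \<times> UNIV) (\<lambda>p. hm u i (fst p) (snd p))"
proof -
  have c: "continuous_on ({0..t0} \<times> UNIV) (\<lambda>p. cmp (u (fst p)) j (snd p / k i) 0 0)" if "j < 4" for j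
    by (rule cont_axis[OF sol_cont[OF that]]) auto
  show ?thesis unfolding hm_def PVf_def pv_def
    by (intro continuous_intros c) auto
qed

lemma hm_zero: "hm u i 0 s = 0"
  unfolding hm_def PVf_def using sol_zero[of 0] by (simp add: cmp_zero pv_zero)

lemma hm_dt: "0 < \<tau> \<Longrightarrow> \<tau> < t0 \<Longrightarrow> ((\<lambda>\<tau>. hm u i \<tau> s) has_real_derivative Htm u i \<tau> s) (at \<tau>)"
proof -
  assume "0 < \<tau>" "\<tau> < t0"
  then have d: "((\<lambda>t. cmp (u t) j (s / k i) 0 0) has_real_derivative dT u j \<tau> (s / k i) 0 0) (at \<tau>)" if "j < 4" for j
    unfolding dT_def using sol_difft[OF that, of \<tau>] by (simp add: DERIV_deriv_iff_real_differentiable)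
  show ?thesis unfolding hm_def PVf_def pv_def Htm_def
    by (intro DERIV_add DERIV_cmult d) auto
qed

lemma hm_ct: "continuous_on ({0<..<t0} \<times> UNIV) (\<lambda>p. Htm u i (fst p) (snd p))"
proof -
  have c: "continuous_on ({0<..<t0} \<times> UNIV) (\<lambda>p. dT u j (fst p) (snd p / k i) 0 0)" if "j < 4" for j
    by (rule cont_axis'[OF sol_contT[OF that]]) auto
  show ?thesis unfolding Htm_def pv_def
    by (intro continuous_intros c) auto
qed

lemma hm_ds_eq:
  assumes "\<tau> \<in> {0..t0}" "i \<in> {1..4}"
  obtains f D where "\<forall>j<4. cmp (u \<tau>) j = (\<lambda>x y z. vec4 (\<lambda>i. f i (\<xi> i x y z)) j)"
    "\<And>q. q \<in> {1..4} \<Longrightarrow> \<forall>x. (f q has_real_derivative D q x) (at x)"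
    "\<And>s. hm u i \<tau> s = f i s" "\<And>s. Hsm u i \<tau> s = D i s"
    "\<And>s. ((\<lambda>s. hm u i \<tau> s) has_real_derivative Hsm u i \<tau> s) (at s)"
proof -
  obtain f where f: "\<forall>i\<in>{1..4}. f i C1_differentiable_on UNIV"
    "\<forall>j<4. cmp (u \<tau>) j = (\<lambda>x y z. vec4 (\<lambda>i. f i (\<xi> i x y z)) j)"
    using sol_Z2[OF assms(1)] unfolding inZ2_iff by blast
  obtain D where D: "\<forall>i\<in>{1..4}. \<forall>x. (f i has_real_derivative D i x) (at x)"
    using C1_ders[OF f(1)] by blast
  have h: "hm u i \<tau> s = f i s" for s unfolding hm_def using PVf_witness[OF f(2) assms(2)] .
  then have hh: "(\<lambda>s. hm u i \<tau> s) = f i" by auto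
  have Hs: "Hsm u i \<tau> s = D i s" for s unfolding Hsm_def hh
    using D assms(2) by (auto intro: DERIV_imp_deriv)
  show ?thesis
    by (rule that[OF f(2)]) (use D h Hs hh assms(2) in auto)
qed

lemma hm_ds: "0 \<le> \<tau> \<Longrightarrow> \<tau> \<le> t0 \<Longrightarrow> i \<in> {1..4} \<Longrightarrow> ((\<lambda>s. hm u i \<tau> s) has_real_derivative Hsm u i \<tau> s) (at s)"
  apply (rule hm_ds_eq[of \<tau> i])
  apply auto[2]
  by blast

lemma hm_eq:
  assumes "0 < \<tau>" "\<tau> < t0" "i \<in> {1..4}"
  shows "Htm u i \<tau> s + cs i * Hsm u i \<tau> s = PVf i A s * sin (\<omega> * \<tau>)"
proof -
  obtain f D where f: "\<forall>j<4. cmp (u \<tau>) j = (\<lambda>x y z. vec4 (\<lambda>i. f i (\<xi> i x y z)) j)"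
    and D: "\<And>q. q \<in> {1..4} \<Longrightarrow> \<forall>x. (f q has_real_derivative D q x) (at x)"
    and Hs: "\<And>s. Hsm u i \<tau> s = D i s"
    apply (rule hm_ds_eq[of \<tau> i])
    using assms apply auto[2]
    by blast
  define x0 where "x0 = s / k i"
  define d where "d q = D q (\<xi> q x0 0 0)" for q
  have dX: "dX u j \<tau> x0 0 0 = vec4 (\<lambda>q. k q * d q) j" if "j < 4" for j
    unfolding dX_def d_def by (rule DERIV_imp_deriv[OF Z2_partials(1)[OF f D that]])
  have dY: "dY u j \<tau> x0 0 0 = vec4 (\<lambda>q. l q * d q) j" if "j < 4" for j
    unfolding dY_def d_def by (rule DERIV_imp_deriv[OF Z2_partials(2)[OF f D that]])
  have dZ: "dZ u j \<tau> x0 0 0 = vec4 (\<lambda>q. m q * d q) j" if "j < 4" for j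
    unfolding dZ_def d_def by (rule DERIV_imp_deriv[OF Z2_partials(3)[OF f D that]])
  have pde: "dT u j \<tau> x0 0 0 = cmp A j x0 0 0 * sin (\<omega> * \<tau>) - vec4 (\<lambda>q. cs q * d q) j" if "j < 4" for j
  proof -
    have "j = 0 \<or> j = 1 \<or> j = 2 \<or> j = 3" using that by auto
    moreover note E = sol_pde[of \<tau> x0 0 0] assms(1,2)
    ultimately show ?thesis
      using spatial0[of d] spatial1[of d] spatial2[of d] spatial3[of d]
      by (auto simp: dX dY dZ algebra_simps)
  qed
  have "Htm u i \<tau> s = pv i (cmp A 0 x0 0 0 * sin (\<omega> * \<tau>) - vec4 (\<lambda>q. cs q * d q) 0)
        (cmp A 1 x0 0 0 * sin (\<omega> * \<tau>) - vec4 (\<lambda>q. cs q * d q) 1)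
        (cmp A 2 x0 0 0 * sin (\<omega> * \<tau>) - vec4 (\<lambda>q. cs q * d q) 2)
        (cmp A 3 x0 0 0 * sin (\<omega> * \<tau>) - vec4 (\<lambda>q. cs q * d q) 3)"
    unfolding Htm_def x0_def[symmetric] by (simp add: pde)
  also have "\<dots> = PVf i A s * sin (\<omega> * \<tau>) - cs i * d i"
    unfolding pv_diff pv_scale pv_vec4[OF assms(3)] PVf_def x0_def by simp
  finally show ?thesis using Hs xi_axis[OF assms(3)] by (simp add: d_def x0_def)
qed

end

end



lemma supn_ge: "bounded3 g \<Longrightarrow> \<bar>g x y z\<bar> \<le> supn g"
  unfolding supn_def bounded3_def
  by (rule cSup_upper) (auto simp: bdd_above_def)

lemma supn_le: "(\<And>x y z. \<bar>g x y z\<bar> \<le> M) \<Longrightarrow> supn g \<le> M"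
  unfolding supn_def by (rule cSup_least) auto

lemma supn_nonneg: "bounded3 g \<Longrightarrow> 0 \<le> supn g"
  using supn_ge[of g 0 0 0] by linarith

lemma z2norm_ge: "j < 4 \<Longrightarrow> supn (cmp A j) \<le> z2norm A"
proof -
  assume "j < 4"
  then have "j = 0 \<or> j = 1 \<or> j = 2 \<or> j = 3" by auto
  then show ?thesis unfolding z2norm_def by auto
qed

lemma z2norm_le: "(\<And>j. j < 4 \<Longrightarrow> supn (cmp A j) \<le> M) \<Longrightarrow> z2norm A \<le> M"
proof -
  assume h: "\<And>j. j < 4 \<Longrightarrow> supn (cmp A j) \<le> M"
  have "supn (cmp A 0) \<le> M" "supn (cmp A 1) \<le> M" "supn (cmp A 2) \<le> M" "supn (cmp A 3) \<le> M"
    by (rule h, simp)+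
  then show ?thesis unfolding z2norm_def by simp
qed

lemma z2norm_nonneg: "bounded3 (cmp A 0) \<Longrightarrow> 0 \<le> z2norm A"
  using supn_nonneg z2norm_ge[of 0 A] by fastforce

lemma bounded3_minus: "bounded3 f \<Longrightarrow> bounded3 g \<Longrightarrow> bounded3 (\<lambda>x y z. f x y z - g x y z)"
  unfolding bounded3_def
proof (elim exE)
  fix B1 B2 assume "\<forall>x y z. \<bar>f x y z\<bar> \<le> B1" "\<forall>x y z. \<bar>g x y z\<bar> \<le> B2"
  then have "\<forall>x y z. \<bar>f x y z - g x y z\<bar> \<le> B1 + B2"
    by (meson abs_triangle_ineq4 add_mono order_trans)
  then show "\<exists>B. \<forall>x y z. \<bar>f x y z - g x y z\<bar> \<le> B" by blast
qed

context wp begin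

lemma inZ2_bounded3: "inZ2 c0 rho0 k l m A \<Longrightarrow> j < 4 \<Longrightarrow> bounded3 (cmp A j)"
  unfolding inZ2_def by blast

lemma vec4_diff: "vec4 d j - vec4 e j = vec4 (\<lambda>i. d i - e i) j"
  unfolding vec4_def by (simp add: algebra_simps)

lemma sol_diff_bound:
  assumes solA: "is_solution U0 c0 rho0 \<omega> k l m t0 A u" and solB: "is_solution U0 c0 rho0 \<omega> k l m t0 B v"
    and i: "i \<in> {1..4}" and t: "t \<in> {0..t0}"
    and qb: "\<And>s. \<bar>PVf i A s - PVf i B s\<bar> \<le> Q"
  shows "\<bar>hm u i t s - hm v i t s\<bar> \<le> Q * t"
proof -
  have Q: "0 \<le> Q" using qb[of 0] by linarith
 have "\<bar>(\<lambda>\<tau> s. hm u i \<tau> s - hm v i \<tau> s) t s\<bar> \<le> Q * t"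
  proof (rule transport_bound[where h="\<lambda>\<tau> s. hm u i \<tau> s - hm v i \<tau> s" and Ht="\<lambda>\<tau> s. Htm u i \<tau> s - Htm v i \<tau> s"
        and Hs="\<lambda>\<tau> s. Hsm u i \<tau> s - Hsm v i \<tau> s" and c="cs i"])
    show "0 \<le> t" "t \<le> t0" using t by auto
    show "continuous_on ({0..t0} \<times> UNIV) (\<lambda>p. hm u i (fst p) (snd p) - hm v i (fst p) (snd p))"
      by (intro continuous_intros hm_cont[OF solA] hm_cont[OF solB])
    show "hm u i 0 s - hm v i 0 s = 0" for s by (simp add: hm_zero[OF solA] hm_zero[OF solB])
    show "((\<lambda>\<tau>. hm u i \<tau> s - hm v i \<tau> s) has_real_derivative Htm u i \<tau> s - Htm v i \<tau> s) (at \<tau>)"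
      if "0 < \<tau>" "\<tau> < t0" for \<tau> s
      by (intro DERIV_diff hm_dt[OF solA] hm_dt[OF solB] that)
    show "((\<lambda>s. hm u i \<tau> s - hm v i \<tau> s) has_real_derivative Hsm u i \<tau> s - Hsm v i \<tau> s) (at s)"
      if "0 < \<tau>" "\<tau> < t0" for \<tau> s
      using that i by (intro DERIV_diff hm_ds[OF solA] hm_ds[OF solB]) auto
    show "continuous_on ({0<..<t0} \<times> UNIV) (\<lambda>p. Htm u i (fst p) (snd p) - Htm v i (fst p) (snd p))"
      by (intro continuous_intros hm_ct[OF solA] hm_ct[OF solB])
    show "\<bar>Htm u i \<tau> s - Htm v i \<tau> s + cs i * (Hsm u i \<tau> s - Hsm v i \<tau> s)\<bar> \<le> Q"
      if "0 < \<tau>" "\<tau> < t0" for \<tau> s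
    proof -
      have "Htm u i \<tau> s - Htm v i \<tau> s + cs i * (Hsm u i \<tau> s - Hsm v i \<tau> s)
          = (PVf i A s - PVf i B s) * sin (\<omega> * \<tau>)"
        using hm_eq[OF solA that i, of s] hm_eq[OF solB that i, of s] by (simp add: algebra_simps)
      also have "\<bar>\<dots>\<bar> \<le> Q * 1"
        unfolding abs_mult by (rule mult_mono) (use qb Q in auto)
      finally show ?thesis by simp
    qed
  qed
  then show ?thesis by simp
qed

lemma sol_recon:
  assumes sol: "is_solution U0 c0 rho0 \<omega> k l m t0 A u" and t: "t \<in> {0..t0}" and j: "j < 4"
  shows "cmp (u t) j x y z = vec4 (\<lambda>i. hm u i t (\<xi> i x y z)) j"
  unfolding hm_def by (rule recon[OF sol_Z2[OF sol t] j])

lemma PVf_diff_bound: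
  assumes A: "inZ2 c0 rho0 k l m A" and B: "inZ2 c0 rho0 k l m B" and i: "i \<in> {1..4}"
  shows "\<bar>PVf i A s - PVf i B s\<bar> \<le> KP * z2norm (amp_minus A B)"
proof -
  have b: "\<bar>cmp A j x y z - cmp B j x y z\<bar> \<le> z2norm (amp_minus A B)" if "j < 4" for j x y z
  proof -
    have bd: "bounded3 (cmp (amp_minus A B) j)"
      unfolding cmp_minus[OF that] by (intro bounded3_minus inZ2_bounded3[OF A that] inZ2_bounded3[OF B that])
    have "\<bar>cmp A j x y z - cmp B j x y z\<bar> = \<bar>cmp (amp_minus A B) j x y z\<bar>" by (simp add: cmp_minus[OF that])
    also have "\<dots> \<le> supn (cmp (amp_minus A B) j)" by (rule supn_ge[OF bd])
    also have "\<dots> \<le> z2norm (amp_minus A B)" by (rule z2norm_ge[OF that])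
    finally show ?thesis .
  qed
  show ?thesis unfolding PVf_def pv_diff[symmetric]
    by (rule pv_bound[OF i]) (intro b; simp)+
qed

lemma well_posed_of_exist:
  assumes ex: "\<And>A. inZ2 c0 rho0 k l m A \<Longrightarrow> \<exists>u. is_solution U0 c0 rho0 \<omega> k l m t0 A u"
  shows "well_posed U0 c0 rho0 \<omega> k l m t0"
  unfolding well_posed_def
proof (intro conjI allI impI ballI)
  fix A assume A: "inZ2 c0 rho0 k l m A"
  show "\<exists>u. is_solution U0 c0 rho0 \<omega> k l m t0 A u" by (rule ex[OF A])
next
  fix A u v t assume su: "is_solution U0 c0 rho0 \<omega> k l m t0 A u" and sv: "is_solution U0 c0 rho0 \<omega> k l m t0 A v"
    and "t \<le> t0"
    show "u t = v t"
    proof (cases "t \<le> 0")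
      case True then show ?thesis using sol_zero[OF su] sol_zero[OF sv] by simp
    next
      case False
      then have t: "t \<in> {0..t0}" using \<open>t \<le> t0\<close> by auto
      have h: "hm u i t s = hm v i t s" if "i \<in> {1..4}" for i s
        using sol_diff_bound[OF su sv that t, of 0 s] by simp
      show ?thesis
      proof (rule amp_ext)
        fix j :: nat assume j: "j < 4"
        show "cmp (u t) j = cmp (v t) j"
        proof (intro ext)
          fix x y z
          show "cmp (u t) j x y z = cmp (v t) j x y z"
            unfolding sol_recon[OF su t j] sol_recon[OF sv t j] by (rule vec4_cong) (simp add: h)
        qed
      qed
    qed
next
  fix As A us u t
  assume As: "\<forall>n. inZ2 c0 rho0 k l m (As n)" and A: "inZ2 c0 rho0 k l m A"
    and lim: "(\<lambda>n. z2norm (amp_minus (As n) A)) \<longlonglongrightarrow> 0"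
    and sus: "\<forall>n. is_solution U0 c0 rho0 \<omega> k l m t0 (As n) (us n)"
    and su: "is_solution U0 c0 rho0 \<omega> k l m t0 A u" and t: "t \<in> {0..t0}"
    define C where "C = KV * (KP * t)"
    have hb: "\<bar>hm (us n) i t s - hm u i t s\<bar> \<le> KP * z2norm (amp_minus (As n) A) * t" if "i \<in> {1..4}" for n i s
      by (rule sol_diff_bound[OF sus[rule_format] su that t]) (rule PVf_diff_bound[OF As[rule_format] A that])
    have cb: "\<bar>cmp (us n t) j x y z - cmp (u t) j x y z\<bar> \<le> C * z2norm (amp_minus (As n) A)" if "j < 4" for n j x y z
    proof -
      have eq: "cmp (us n t) j x y z - cmp (u t) j x y z = vec4 (\<lambda>i. hm (us n) i t (\<xi> i x y z) - hm u i t (\<xi> i x y z)) j"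
        unfolding sol_recon[OF sus[rule_format] t that] sol_recon[OF su t that] vec4_diff ..
      have le: "\<bar>vec4 (\<lambda>i. hm (us n) i t (\<xi> i x y z) - hm u i t (\<xi> i x y z)) j\<bar> \<le> KV * (KP * z2norm (amp_minus (As n) A) * t)"
        by (rule vec4_bound[OF that]) (rule hb)
      have e2: "KV * (KP * z2norm (amp_minus (As n) A) * t) = C * z2norm (amp_minus (As n) A)"
        unfolding C_def by (simp only: mult.assoc mult.commute mult.left_commute)
      show ?thesis unfolding eq using le e2 by linarith
    qed
    have bnd: "\<bar>z2norm (amp_minus (us n t) (u t))\<bar> \<le> C * z2norm (amp_minus (As n) A)" for n
    proof -
      have le: "z2norm (amp_minus (us n t) (u t)) \<le> C * z2norm (amp_minus (As n) A)"
        by (rule z2norm_le, rule supn_le) (simp add: cmp_minus cb)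
      have "bounded3 (cmp (amp_minus (us n t) (u t)) 0)"
        unfolding bounded3_def cmp_minus[of 0, simplified] using cb[of 0 n] by auto
      then have "0 \<le> z2norm (amp_minus (us n t) (u t))" by (rule z2norm_nonneg)
      then show ?thesis using le by simp
    qed
    have "(\<lambda>n. C * z2norm (amp_minus (As n) A)) \<longlonglongrightarrow> 0"
      using tendsto_mult_right_zero[OF lim] by simp
    then show "(\<lambda>n. z2norm (amp_minus (us n t) (u t))) \<longlonglongrightarrow> 0"
      by (rule Lim_null_comparison[rotated]) (use bnd in \<open>simp add: eventually_sequentially\<close>)
qed

end



definition antid :: "(real \<Rightarrow> real) \<Rightarrow> real \<Rightarrow> real" where
  "antid g = (SOME P. \<forall>x. (P has_real_derivative g x) (at x))"

lemma antid: "continuous_on UNIV g \<Longrightarrow> (antid g has_real_derivative g x) (at x)"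
  unfolding antid_def using someI_ex[OF antider] by blast

lemma antid_isCont: "continuous_on UNIV g \<Longrightarrow> isCont (antid g) x"
  using antid DERIV_isCont by blast

definition Gf :: "real \<Rightarrow> real \<Rightarrow> (real \<Rightarrow> real) \<Rightarrow> (real \<Rightarrow> real) \<Rightarrow> real \<Rightarrow> real \<Rightarrow> real" where
  "Gf \<omega> c q Dq t s = (if c = 0 then q s * (1 - cos (\<omega> * t)) / \<omega> else
     (sin (\<omega> * t - \<omega> * s / c) * (antid (\<lambda>x. q x * cos (\<omega> * x / c)) s - antid (\<lambda>x. q x * cos (\<omega> * x / c)) (s - c * t))
    + cos (\<omega> * t - \<omega> * s / c) * (antid (\<lambda>x. q x * sin (\<omega> * x / c)) s - antid (\<lambda>x. q x * sin (\<omega> * x / c)) (s - c * t))) / c)"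

definition Gtf :: "real \<Rightarrow> real \<Rightarrow> (real \<Rightarrow> real) \<Rightarrow> (real \<Rightarrow> real) \<Rightarrow> real \<Rightarrow> real \<Rightarrow> real" where
  "Gtf \<omega> c q Dq t s = (if c = 0 then q s * sin (\<omega> * t) else
     (\<omega> * cos (\<omega> * t - \<omega> * s / c) * (antid (\<lambda>x. q x * cos (\<omega> * x / c)) s - antid (\<lambda>x. q x * cos (\<omega> * x / c)) (s - c * t))
    + sin (\<omega> * t - \<omega> * s / c) * (c * (q (s - c * t) * cos (\<omega> * (s - c * t) / c)))
    - \<omega> * sin (\<omega> * t - \<omega> * s / c) * (antid (\<lambda>x. q x * sin (\<omega> * x / c)) s - antid (\<lambda>x. q x * sin (\<omega> * x / c)) (s - c * t))
    + cos (\<omega> * t - \<omega> * s / c) * (c * (q (s - c * t) * sin (\<omega> * (s - c * t) / c)))) / c)"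

definition Gsf :: "real \<Rightarrow> real \<Rightarrow> (real \<Rightarrow> real) \<Rightarrow> (real \<Rightarrow> real) \<Rightarrow> real \<Rightarrow> real \<Rightarrow> real" where
  "Gsf \<omega> c q Dq t s = (if c = 0 then Dq s * (1 - cos (\<omega> * t)) / \<omega> else
     (- (\<omega> / c) * cos (\<omega> * t - \<omega> * s / c) * (antid (\<lambda>x. q x * cos (\<omega> * x / c)) s - antid (\<lambda>x. q x * cos (\<omega> * x / c)) (s - c * t))
    + sin (\<omega> * t - \<omega> * s / c) * (q s * cos (\<omega> * s / c) - q (s - c * t) * cos (\<omega> * (s - c * t) / c))
    + (\<omega> / c) * sin (\<omega> * t - \<omega> * s / c) * (antid (\<lambda>x. q x * sin (\<omega> * x / c)) s - antid (\<lambda>x. q x * sin (\<omega> * x / c)) (s - c * t))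
    + cos (\<omega> * t - \<omega> * s / c) * (q s * sin (\<omega> * s / c) - q (s - c * t) * sin (\<omega> * (s - c * t) / c))) / c)"

context
  fixes \<omega> c :: real and q Dq :: "real \<Rightarrow> real"
  assumes om: "\<omega> \<noteq> 0" and qd: "\<And>x. (q has_real_derivative Dq x) (at x)" and cDq: "continuous_on UNIV Dq"
begin

lemma q_cont: "continuous_on UNIV q"
  using qd by (meson DERIV_isCont continuous_at_imp_continuous_on)

lemma q_isCont: "isCont q x"
  using qd DERIV_isCont by blast

lemma Gf_zero: "Gf \<omega> c q Dq 0 s = 0"
  unfolding Gf_def by simp

lemma Gf_eq: "Gtf \<omega> c q Dq t s + c * Gsf \<omega> c q Dq t s = q s * sin (\<omega> * t)"
proof (cases "c = 0")
  case True then show ?thesis unfolding Gtf_def Gsf_def by simp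
next
  case False
  have th: "\<omega> * t = (\<omega> * t - \<omega> * s / c) + \<omega> * s / c" by simp
  have "sin (\<omega> * t) = sin (\<omega> * t - \<omega> * s / c) * cos (\<omega> * s / c) + cos (\<omega> * t - \<omega> * s / c) * sin (\<omega> * s / c)"
    by (subst th) (rule sin_add)
  then show ?thesis unfolding Gtf_def Gsf_def using False by (simp add: field_simps)
qed


lemma pc_cont: "continuous_on UNIV (\<lambda>x. q x * cos (\<omega> * x / c))" "continuous_on UNIV (\<lambda>x. q x * sin (\<omega> * x / c))"
  by (simp_all only: divide_inverse) (intro continuous_intros q_cont)+

lemma Pch: "(g has_real_derivative Db) (at x) \<Longrightarrow>
  ((\<lambda>x. antid (\<lambda>x. q x * cos (\<omega> * x / c)) (g x)) has_real_derivative (q (g x) * cos (\<omega> * g x / c)) * Db) (at x)"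
  by (rule DERIV_chain2[OF antid[OF pc_cont(1)]])

lemma Qch: "(g has_real_derivative Db) (at x) \<Longrightarrow>
  ((\<lambda>x. antid (\<lambda>x. q x * sin (\<omega> * x / c)) (g x)) has_real_derivative (q (g x) * sin (\<omega> * g x / c)) * Db) (at x)"
  by (rule DERIV_chain2[OF antid[OF pc_cont(2)]])

lemma Gf_dt: "((\<lambda>t. Gf \<omega> c q Dq t s) has_real_derivative Gtf \<omega> c q Dq t s) (at t)"
proof (cases "c = 0")
  case True
  then show ?thesis unfolding Gf_def Gtf_def using om
    by (auto intro!: derivative_eq_intros)
next
  case False
  show ?thesis unfolding Gf_def Gtf_def if_not_P[OF False]
    apply (rule derivative_eq_intros Pch Qch refl | simp)+
    apply (simp_all add: field_simps False)
    done
qed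

lemma Gf_ds: "((\<lambda>s. Gf \<omega> c q Dq t s) has_real_derivative Gsf \<omega> c q Dq t s) (at s)"
proof (cases "c = 0")
  case True
  note D = qd[THEN DERIV_chain2]
  show ?thesis unfolding Gf_def Gsf_def using om True
    by (auto intro!: derivative_eq_intros qd)
next
  case False
  show ?thesis unfolding Gf_def Gsf_def if_not_P[OF False]
    apply (rule derivative_eq_intros Pch Qch antid[OF pc_cont(1)] antid[OF pc_cont(2)] refl | simp add: False)+
    apply (simp_all add: field_simps False)
    done
qed


lemma antid_cont_on: "continuous_on UNIV g \<Longrightarrow> continuous_on UNIV (antid g)"
  using antid_isCont continuous_at_imp_continuous_on by blast

lemma Pcc: "continuous_on S g \<Longrightarrow> continuous_on S (\<lambda>x. antid (\<lambda>x. q x * cos (\<omega> * x / c)) (g x))"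
  by (rule continuous_on_compose2[OF antid_cont_on[OF pc_cont(1)]]) auto

lemma Qcc: "continuous_on S g \<Longrightarrow> continuous_on S (\<lambda>x. antid (\<lambda>x. q x * sin (\<omega> * x / c)) (g x))"
  by (rule continuous_on_compose2[OF antid_cont_on[OF pc_cont(2)]]) auto

lemma qcc: "continuous_on S g \<Longrightarrow> continuous_on S (\<lambda>x. q (g x))"
  by (rule continuous_on_compose2[OF q_cont]) auto

lemma Dqcc: "continuous_on S g \<Longrightarrow> continuous_on S (\<lambda>x. Dq (g x))"
  by (rule continuous_on_compose2[OF cDq]) auto

lemma Gf_cont: "continuous_on UNIV (\<lambda>p. Gf \<omega> c q Dq (fst p) (snd p))"
proof (cases "c = 0")
  case True then show ?thesis unfolding Gf_def using om by (auto intro!: continuous_intros qcc)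
next
  case False then show ?thesis unfolding Gf_def if_not_P[OF False]
    by (intro continuous_intros Pcc Qcc qcc) (auto simp: False)
qed

lemma Gtf_cont: "continuous_on UNIV (\<lambda>p. Gtf \<omega> c q Dq (fst p) (snd p))"
proof (cases "c = 0")
  case True then show ?thesis unfolding Gtf_def using om by (auto intro!: continuous_intros qcc)
next
  case False then show ?thesis unfolding Gtf_def if_not_P[OF False]
    by (intro continuous_intros Pcc Qcc qcc) (auto simp: False)
qed

lemma Gsf_cont: "continuous_on UNIV (\<lambda>p. Gsf \<omega> c q Dq (fst p) (snd p))"
proof (cases "c = 0")
  case True then show ?thesis unfolding Gsf_def using om by (auto intro!: continuous_intros Dqcc)
next
  case False then show ?thesis unfolding Gsf_def if_not_P[OF False]
    by (intro continuous_intros Pcc Qcc qcc) (auto simp: False)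
qed


lemma Gf_bound:
  assumes qb: "\<And>s. \<bar>q s\<bar> \<le> B" and t: "0 \<le> t"
  shows "\<bar>Gf \<omega> c q Dq t s\<bar> \<le> B * t"
proof (rule transport_bound[where h="Gf \<omega> c q Dq" and Ht="Gtf \<omega> c q Dq" and Hs="Gsf \<omega> c q Dq" and c=c])
  show "0 \<le> t" "t \<le> t + 1" using t by auto
  show "continuous_on ({0..t + 1} \<times> UNIV) (\<lambda>p. Gf \<omega> c q Dq (fst p) (snd p))"
    by (rule continuous_on_subset[OF Gf_cont]) auto
  show "continuous_on ({0<..<t + 1} \<times> UNIV) (\<lambda>p. Gtf \<omega> c q Dq (fst p) (snd p))"
    by (rule continuous_on_subset[OF Gtf_cont]) auto
  show "Gf \<omega> c q Dq 0 s = 0" for s by (rule Gf_zero)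
  show "((\<lambda>\<tau>. Gf \<omega> c q Dq \<tau> s) has_real_derivative Gtf \<omega> c q Dq \<tau> s) (at \<tau>)" for \<tau> s by (rule Gf_dt)
  show "((\<lambda>s. Gf \<omega> c q Dq \<tau> s) has_real_derivative Gsf \<omega> c q Dq \<tau> s) (at s)" for \<tau> s by (rule Gf_ds)
  show "\<bar>Gtf \<omega> c q Dq \<tau> s + c * Gsf \<omega> c q Dq \<tau> s\<bar> \<le> B" for \<tau> s
  proof -
    have "\<bar>q s * sin (\<omega> * \<tau>)\<bar> \<le> B * 1"
      unfolding abs_mult by (rule mult_mono) (use qb[of s] in auto)
    then show ?thesis by (simp add: Gf_eq)
  qed
qed

end



lemma cont_comp2:
  assumes "continuous_on UNIV (\<lambda>p. F (fst p) (snd p))" "continuous_on S a" "continuous_on S b"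
  shows "continuous_on S (\<lambda>x. F (a x) (b x))"
proof -
  have "continuous_on S (\<lambda>x. (\<lambda>p. F (fst p) (snd p)) (a x, b x))"
    by (rule continuous_on_compose2[OF assms(1)]) (auto intro!: continuous_intros assms(2,3))
  then show ?thesis by simp
qed

context wp begin

lemma vec4_add: "vec4 a j + vec4 b j = vec4 (\<lambda>i. a i + b i) j"
  unfolding vec4_def by (simp add: algebra_simps)

lemma vec4_scale: "vec4 (\<lambda>i. a i * c) j = vec4 a j * c"
  unfolding vec4_def by (simp add: algebra_simps)

lemma vec4_zero: "vec4 (\<lambda>i. 0) j = 0"
  unfolding vec4_def by simp

definition mk :: "(nat \<Rightarrow> real \<Rightarrow> real) \<Rightarrow> amp" where
  "mk g = ((\<lambda>x y z. vec4 (\<lambda>i. g i (\<xi> i x y z)) 0), (\<lambda>x y z. vec4 (\<lambda>i. g i (\<xi> i x y z)) 1),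
           (\<lambda>x y z. vec4 (\<lambda>i. g i (\<xi> i x y z)) 2), (\<lambda>x y z. vec4 (\<lambda>i. g i (\<xi> i x y z)) 3))"

lemma cmp_mk: "j < 4 \<Longrightarrow> cmp (mk g) j = (\<lambda>x y z. vec4 (\<lambda>i. g i (\<xi> i x y z)) j)"
proof -
  assume "j < 4"
  then have "j = 0 \<or> j = 1 \<or> j = 2 \<or> j = 3" by auto
  then show ?thesis by (auto simp: mk_def cmp_def)
qed

lemma C1_ders':
  assumes "\<forall>i\<in>{1..4}. f i C1_differentiable_on UNIV"
  shows "\<exists>D. \<forall>i\<in>{1..4}. (\<forall>x. (f i has_real_derivative D i x) (at x)) \<and> continuous_on UNIV (D i)"
proof -
  have "\<forall>i\<in>{1..4}. \<exists>Di. (\<forall>x. (f i has_real_derivative Di x) (at x)) \<and> continuous_on UNIV Di"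
    using assms unfolding C1_differentiable_on_def has_real_derivative_iff_has_vector_derivative by blast
  then show ?thesis by (rule bchoice)
qed

lemma existence:
  assumes A: "inZ2 c0 rho0 k l m A"
  shows "\<exists>u. is_solution U0 c0 rho0 \<omega> k l m t0 A u"
proof -
  obtain f where fC1: "\<forall>i\<in>{1..4}. f i C1_differentiable_on UNIV"
    and fA: "\<forall>j<4. cmp A j = (\<lambda>x y z. vec4 (\<lambda>i. f i (\<xi> i x y z)) j)"
    using A unfolding inZ2_iff by blast
  obtain D where D: "\<forall>i\<in>{1..4}. (\<forall>x. (f i has_real_derivative D i x) (at x)) \<and> continuous_on UNIV (D i)"
    using C1_ders'[OF fC1] by blast
  obtain M where M: "\<forall>j<4. \<forall>x y z. \<bar>cmp A j x y z\<bar> \<le> M" using inZ2_bound[OF A] by blast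
  have fb: "\<bar>f i s\<bar> \<le> KP * M" if "i \<in> {1..4}" for i s
  proof -
    have "f i s = PVf i A s" using PVf_witness[OF fA that] by simp
    also have "\<bar>\<dots>\<bar> \<le> KP * M" unfolding PVf_def by (rule pv_bound[OF that]) (use M in auto)
    finally show ?thesis .
  qed
  define G where "G i = Gf \<omega> (cs i) (f i) (D i)" for i
  define Gt where "Gt i = Gtf \<omega> (cs i) (f i) (D i)" for i
  define Gs where "Gs i = Gsf \<omega> (cs i) (f i) (D i)" for i
  have Gdt: "((\<lambda>t. G i t s) has_real_derivative Gt i t s) (at t)" if "i \<in> {1..4}" for i t s
    unfolding G_def Gt_def by (rule Gf_dt) (use om D that in auto)
  have Gds: "((\<lambda>s. G i t s) has_real_derivative Gs i t s) (at s)" if "i \<in> {1..4}" for i t s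
    unfolding G_def Gs_def by (rule Gf_ds) (use om D that in auto)
  have Gc: "continuous_on UNIV (\<lambda>p. G i (fst p) (snd p))" if "i \<in> {1..4}" for i
    unfolding G_def by (rule Gf_cont) (use om D that in auto)
  have Gtc: "continuous_on UNIV (\<lambda>p. Gt i (fst p) (snd p))" if "i \<in> {1..4}" for i
    unfolding Gt_def by (rule Gtf_cont) (use om D that in auto)
  have Gsc: "continuous_on UNIV (\<lambda>p. Gs i (fst p) (snd p))" if "i \<in> {1..4}" for i
    unfolding Gs_def by (rule Gsf_cont) (use om D that in auto)
  have Geq: "Gt i t s + cs i * Gs i t s = f i s * sin (\<omega> * t)" if "i \<in> {1..4}" for i t s
    unfolding Gt_def Gs_def by (rule Gf_eq) (use om D that in auto)
  have G0: "G i 0 s = 0" for i s unfolding G_def Gf_def by simp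
  have Gb: "\<bar>G i t s\<bar> \<le> KP * M * t" if "i \<in> {1..4}" "0 \<le> t" for i t s
    unfolding G_def by (rule Gf_bound) (use om D that fb in auto)
  define u where "u t = mk (\<lambda>i. G i (max t 0))" for t
  have cu: "cmp (u t) j = (\<lambda>x y z. vec4 (\<lambda>i. G i (max t 0) (\<xi> i x y z)) j)" if "j < 4" for t j
    unfolding u_def using cmp_mk[OF that] by simp
  have cu': "\<forall>j<4. cmp (u t) j = (\<lambda>x y z. vec4 (\<lambda>i. G i (max t 0) (\<xi> i x y z)) j)" for t
    using cu by blast
  have GdsD: "\<And>i. i \<in> {1..4} \<Longrightarrow> \<forall>x. (G i \<tau> has_real_derivative Gs i \<tau> x) (at x)" for \<tau>
    using Gds by auto
  have dX: "dX u j t x y z = vec4 (\<lambda>i. k i * Gs i (max t 0) (\<xi> i x y z)) j"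
   and dY: "dY u j t x y z = vec4 (\<lambda>i. l i * Gs i (max t 0) (\<xi> i x y z)) j"
   and dZ: "dZ u j t x y z = vec4 (\<lambda>i. m i * Gs i (max t 0) (\<xi> i x y z)) j"
   and dXd: "((\<lambda>s. cmp (u t) j s y z) has_real_derivative vec4 (\<lambda>i. k i * Gs i (max t 0) (\<xi> i x y z)) j) (at x)"
   and dYd: "((\<lambda>s. cmp (u t) j x s z) has_real_derivative vec4 (\<lambda>i. l i * Gs i (max t 0) (\<xi> i x y z)) j) (at y)"
   and dZd: "((\<lambda>s. cmp (u t) j x y s) has_real_derivative vec4 (\<lambda>i. m i * Gs i (max t 0) (\<xi> i x y z)) j) (at z)"
    if "j < 4" for j t x y z
  proof -
    note P = Z2_partials[OF cu'[of t] GdsD that, where x=x and y=y and z=z]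
    show "((\<lambda>s. cmp (u t) j s y z) has_real_derivative vec4 (\<lambda>i. k i * Gs i (max t 0) (\<xi> i x y z)) j) (at x)"
      "((\<lambda>s. cmp (u t) j x s z) has_real_derivative vec4 (\<lambda>i. l i * Gs i (max t 0) (\<xi> i x y z)) j) (at y)"
      "((\<lambda>s. cmp (u t) j x y s) has_real_derivative vec4 (\<lambda>i. m i * Gs i (max t 0) (\<xi> i x y z)) j) (at z)"
      using P by auto
    show "dX u j t x y z = vec4 (\<lambda>i. k i * Gs i (max t 0) (\<xi> i x y z)) j"
      unfolding dX_def by (rule DERIV_imp_deriv) (use P in auto)
    show "dY u j t x y z = vec4 (\<lambda>i. l i * Gs i (max t 0) (\<xi> i x y z)) j"
      unfolding dY_def by (rule DERIV_imp_deriv) (use P in auto)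
    show "dZ u j t x y z = vec4 (\<lambda>i. m i * Gs i (max t 0) (\<xi> i x y z)) j"
      unfolding dZ_def by (rule DERIV_imp_deriv) (use P in auto)
  qed
  have dTd: "((\<lambda>s. cmp (u s) j x y z) has_real_derivative vec4 (\<lambda>i. Gt i t (\<xi> i x y z)) j) (at t)"
    if "j < 4" "0 < t" for j t x y z
  proof -
    have d: "((\<lambda>s. vec4 (\<lambda>i. G i s (\<xi> i x y z)) j) has_real_derivative vec4 (\<lambda>i. Gt i t (\<xi> i x y z)) j) (at t)"
      unfolding vec4_def by (intro DERIV_add DERIV_cmult Gdt) auto
    show ?thesis
      by (rule has_field_derivative_transform_within_open[OF d, of "{0<..}"]) (use that cu in auto)
  qed
  have dT: "dT u j t x y z = vec4 (\<lambda>i. Gt i t (\<xi> i x y z)) j" if "j < 4" "0 < t" for j t x y z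
    unfolding dT_def by (rule DERIV_imp_deriv[OF dTd[OF that]])
  have xic: "continuous_on S (\<lambda>p. \<xi> i (fst (snd p)) (fst (snd (snd p))) (snd (snd (snd p))))" for S i
    unfolding xi_def by (intro continuous_intros)
  have "is_solution U0 c0 rho0 \<omega> k l m t0 A u"
    unfolding is_solution_def
  proof (intro conjI allI impI ballI)
    show "u t = amp_zero" if "t \<le> 0" for t
    proof (rule amp_ext)
      fix j :: nat assume j: "j < 4"
      show "cmp (u t) j = cmp amp_zero j" unfolding cu[OF j] cmp_zero using that by (simp add: G0 vec4_zero)
    qed
  next
    fix t assume t: "t \<in> {0..t0}"
    show "inZ2 c0 rho0 k l m (u t)"
      unfolding inZ2_iff
    proof (intro exI conjI)
      show "\<forall>i\<in>{1..4}. G i (max t 0) C1_differentiable_on UNIV"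
      proof
        fix i :: nat assume i: "i \<in> {1..4}"
        have "continuous_on UNIV (\<lambda>s. Gs i (max t 0) s)"
          by (rule cont_comp2[OF Gsc[OF i]]) (auto intro!: continuous_intros)
        then show "G i (max t 0) C1_differentiable_on UNIV"
          unfolding C1_differentiable_on_def has_real_derivative_iff_has_vector_derivative[symmetric]
          using Gds[OF i] by blast
      qed
      show "\<forall>j<4. cmp (u t) j = (\<lambda>x y z. vec4 (\<lambda>i. G i (max t 0) (\<xi> i x y z)) j)" by (rule cu')
      show "\<forall>j<4. bounded3 (cmp (u t) j)"
      proof (intro allI impI)
        fix j :: nat assume j: "j < 4"
        have "\<bar>cmp (u t) j x y z\<bar> \<le> KV * (KP * M * max t 0)" for x y z
          unfolding cu[OF j] by (rule vec4_bound[OF j]) (rule Gb; auto)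
        then show "bounded3 (cmp (u t) j)" unfolding bounded3_def by blast
      qed
    qed
  next
    fix j :: nat assume j: "j < 4"
    show "continuous_on ({..t0} \<times> UNIV) (uncurry4 (\<lambda>t. cmp (u t) j))"
    proof -
      have "continuous_on ({..t0} \<times> UNIV) (\<lambda>p. vec4 (\<lambda>i. G i (max (fst p) 0) (\<xi> i (fst (snd p)) (fst (snd (snd p))) (snd (snd (snd p))))) j)"
        unfolding vec4_def
        by (intro continuous_intros cont_comp2[OF Gc] xic) auto
      then show ?thesis unfolding uncurry4_def cu[OF j] by simp
    qed
    show "continuous_on ({0<..<t0} \<times> UNIV) (uncurry4 (dT u j))"
    proof -
      have "continuous_on ({0<..<t0} \<times> UNIV) (\<lambda>p. vec4 (\<lambda>i. Gt i (fst p) (\<xi> i (fst (snd p)) (fst (snd (snd p))) (snd (snd (snd p))))) j)"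
        unfolding vec4_def
        by (intro continuous_intros cont_comp2[OF Gtc] xic) auto
      then show ?thesis
        by (rule continuous_on_eq) (auto simp: uncurry4_def dT[OF j])
    qed
    show "continuous_on ({0<..<t0} \<times> UNIV) (uncurry4 (dX u j))"
    proof -
      have "continuous_on ({0<..<t0} \<times> UNIV) (\<lambda>p. vec4 (\<lambda>i. k i * Gs i (max (fst p) 0) (\<xi> i (fst (snd p)) (fst (snd (snd p))) (snd (snd (snd p))))) j)"
        unfolding vec4_def
        by (intro continuous_intros cont_comp2[OF Gsc] xic) auto
      then show ?thesis unfolding uncurry4_def dX[OF j] by simp
    qed
    show "continuous_on ({0<..<t0} \<times> UNIV) (uncurry4 (dY u j))"
    proof -
      have "continuous_on ({0<..<t0} \<times> UNIV) (\<lambda>p. vec4 (\<lambda>i. l i * Gs i (max (fst p) 0) (\<xi> i (fst (snd p)) (fst (snd (snd p))) (snd (snd (snd p))))) j)"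
        unfolding vec4_def
        by (intro continuous_intros cont_comp2[OF Gsc] xic) auto
      then show ?thesis unfolding uncurry4_def dY[OF j] by simp
    qed
    show "continuous_on ({0<..<t0} \<times> UNIV) (uncurry4 (dZ u j))"
    proof -
      have "continuous_on ({0<..<t0} \<times> UNIV) (\<lambda>p. vec4 (\<lambda>i. m i * Gs i (max (fst p) 0) (\<xi> i (fst (snd p)) (fst (snd (snd p))) (snd (snd (snd p))))) j)"
        unfolding vec4_def
        by (intro continuous_intros cont_comp2[OF Gsc] xic) auto
      then show ?thesis unfolding uncurry4_def dZ[OF j] by simp
    qed
    show "(\<lambda>s. cmp (u s) j x y z) differentiable (at t)" if "t \<in> {0<..<t0}" for t x y z
      using dTd[OF j, of t] that by (auto simp: real_differentiable_def)
    show "(\<lambda>s. cmp (u t) j s y z) differentiable (at x)" for t x y z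
      using dXd[OF j, where t=t and x=x and y=y and z=z] by (auto simp: real_differentiable_def)
    show "(\<lambda>s. cmp (u t) j x s z) differentiable (at y)" for t x y z
      using dYd[OF j, where t=t and x=x and y=y and z=z] by (auto simp: real_differentiable_def)
    show "(\<lambda>s. cmp (u t) j x y s) differentiable (at z)" for t x y z
      using dZd[OF j, where t=t and x=x and y=y and z=z] by (auto simp: real_differentiable_def)
  next
    fix t x y z assume t: "t \<in> {0<..<t0}"
    then have tp: "0 < t" by simp
    define d where "d i = Gs i t (\<xi> i x y z)" for i
    have e: "vec4 (\<lambda>i. Gt i t (\<xi> i x y z)) j + vec4 (\<lambda>i. cs i * d i) j = cmp A j x y z * sin (\<omega> * t)"
      if "j < 4" for j
    proof -
      have "vec4 (\<lambda>i. Gt i t (\<xi> i x y z)) j + vec4 (\<lambda>i. cs i * d i) j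
          = vec4 (\<lambda>i. f i (\<xi> i x y z) * sin (\<omega> * t)) j"
        unfolding vec4_add d_def by (rule vec4_cong) (simp add: Geq)
      also have "\<dots> = cmp A j x y z * sin (\<omega> * t)" unfolding vec4_scale using fA that by simp
      finally show ?thesis .
    qed
    have mt: "max t 0 = t" using tp by simp
    note dd = dX[of _ t x y z, unfolded mt, folded d_def] dY[of _ t x y z, unfolded mt, folded d_def]
      dZ[of _ t x y z, unfolded mt, folded d_def] dT[OF _ tp, of _ x y z]
    have E: "dT u 0 t x y z + U0 * dX u 0 t x y z + 1 / rho0 * dX u 3 t x y z = cmp A 0 x y z * sin (\<omega> * t) \<and>
        dT u 1 t x y z + U0 * dX u 1 t x y z + 1 / rho0 * dY u 3 t x y z = cmp A 1 x y z * sin (\<omega> * t) \<and>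
        dT u 2 t x y z + U0 * dX u 2 t x y z + 1 / rho0 * dZ u 3 t x y z = cmp A 2 x y z * sin (\<omega> * t) \<and>
        dT u 3 t x y z + U0 * dX u 3 t x y z + rho0 * c0\<^sup>2 * (dX u 0 t x y z + dY u 1 t x y z + dZ u 2 t x y z)
          = cmp A 3 x y z * sin (\<omega> * t)"
      using e[of 0] e[of 1] e[of 2] e[of 3] spatial0[of d] spatial1[of d] spatial2[of d] spatial3[of d]
      by (simp add: dd add.assoc)
    then show "dT u 0 t x y z + U0 * dX u 0 t x y z + 1 / rho0 * dX u 3 t x y z = cmp A 0 x y z * sin (\<omega> * t)"
      "dT u 1 t x y z + U0 * dX u 1 t x y z + 1 / rho0 * dY u 3 t x y z = cmp A 1 x y z * sin (\<omega> * t)"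
      "dT u 2 t x y z + U0 * dX u 2 t x y z + 1 / rho0 * dZ u 3 t x y z = cmp A 2 x y z * sin (\<omega> * t)"
      "dT u 3 t x y z + U0 * dX u 3 t x y z + rho0 * c0\<^sup>2 * (dX u 0 t x y z + dY u 1 t x y z + dZ u 2 t x y z)
          = cmp A 3 x y z * sin (\<omega> * t)" by blast+
  qed
  then show ?thesis by blast
qed

end



context wp begin

lemma cs3: "cs 3 = U0 * k 3" unfolding cs_def by simp
lemma cs3_ne: "cs 3 \<noteq> 0" using cs3 U0pos k3 by simp

definition gr :: "real \<Rightarrow> real \<Rightarrow> real \<Rightarrow> real" where
  "gr a t s = a * ((t / 2) * cos (\<omega> / cs 3 * s - \<omega> * t) - sin (\<omega> / cs 3 * s + \<omega> * t) / (4 * \<omega>)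
      + sin (\<omega> / cs 3 * s - \<omega> * t) / (4 * \<omega>))"

definition grt :: "real \<Rightarrow> real \<Rightarrow> real \<Rightarrow> real" where
  "grt a t s = a * (cos (\<omega> / cs 3 * s - \<omega> * t) / 4 + (t / 2) * \<omega> * sin (\<omega> / cs 3 * s - \<omega> * t)
      - cos (\<omega> / cs 3 * s + \<omega> * t) / 4)"

definition grs :: "real \<Rightarrow> real \<Rightarrow> real \<Rightarrow> real" where
  "grs a t s = a * (- (t / 2) * (\<omega> / cs 3) * sin (\<omega> / cs 3 * s - \<omega> * t)
      - (\<omega> / cs 3) * cos (\<omega> / cs 3 * s + \<omega> * t) / (4 * \<omega>) + (\<omega> / cs 3) * cos (\<omega> / cs 3 * s - \<omega> * t) / (4 * \<omega>))"

lemma gr_dt: "((\<lambda>t. gr a t s) has_real_derivative grt a t s) (at t)"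
  unfolding gr_def grt_def
  apply (rule derivative_eq_intros refl | simp add: om cs3_ne)+
  done

lemma gr_ds: "((\<lambda>s. gr a t s) has_real_derivative grs a t s) (at s)"
  unfolding gr_def grs_def
  apply (rule derivative_eq_intros refl | simp add: om cs3_ne)+
  using om cs3_ne by (simp add: field_simps)

lemma gr_eq: "grt a t s + cs 3 * grs a t s = a * sin (\<omega> / cs 3 * s) * sin (\<omega> * t)"
proof -
  have "grt a t s + cs 3 * grs a t s = a * (cos (\<omega> / cs 3 * s - \<omega> * t) - cos (\<omega> / cs 3 * s + \<omega> * t)) / 2"
    unfolding grt_def grs_def using om cs3_ne by (simp add: field_simps)
  also have "\<dots> = a * sin (\<omega> / cs 3 * s) * sin (\<omega> * t)"
    by (simp add: cos_diff cos_add)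
  finally show ?thesis .
qed

lemma gr_cont: "continuous_on UNIV (\<lambda>p. gr a (fst p) (snd p))"
  unfolding gr_def by (intro continuous_intros) (use om in auto)

lemma grt_cont: "continuous_on UNIV (\<lambda>p. grt a (fst p) (snd p))"
  unfolding grt_def by (intro continuous_intros) auto

lemma gr_zero: "gr a 0 s = 0"
  unfolding gr_def by simp

lemma gr_val: "gr a T (cs 3 * T) = a * (T / 2 - sin (2 * \<omega> * T) / (4 * \<omega>))"
proof -
  have "\<omega> / cs 3 * (cs 3 * T) = \<omega> * T" using cs3_ne by simp
  then show ?thesis unfolding gr_def by (simp add: algebra_simps mult_2)
qed


lemma KP_nonneg: "0 \<le> KP" unfolding KP_def by (intro sum_nonneg) auto
lemma KV_nonneg: "0 \<le> KV" unfolding KV_def by (intro sum_nonneg) auto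

lemma unstable:
  "\<not> (\<forall>\<epsilon>>0. \<exists>\<eta>>0. \<forall>A. inZ2 c0 rho0 k l m A \<longrightarrow> z2norm A < \<eta> \<longrightarrow>
        (\<forall>t0>0. \<forall>u. is_solution U0 c0 rho0 \<omega> k l m t0 A u \<longrightarrow>
           (\<forall>t\<in>{0..t0}. z2norm (u t) < \<epsilon>)))"
proof
  assume H: "\<forall>\<epsilon>>0. \<exists>\<eta>>0. \<forall>A. inZ2 c0 rho0 k l m A \<longrightarrow> z2norm A < \<eta> \<longrightarrow>
        (\<forall>t0>0. \<forall>u. is_solution U0 c0 rho0 \<omega> k l m t0 A u \<longrightarrow>
           (\<forall>t\<in>{0..t0}. z2norm (u t) < \<epsilon>))"
  then obtain \<eta> where \<eta>: "\<eta> > 0" and H1: "\<forall>A. inZ2 c0 rho0 k l m A \<longrightarrow> z2norm A < \<eta> \<longrightarrow>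
        (\<forall>t0>0. \<forall>u. is_solution U0 c0 rho0 \<omega> k l m t0 A u \<longrightarrow>
           (\<forall>t\<in>{0..t0}. z2norm (u t) < 1))"
    by (meson zero_less_one)
  define a where "a = \<eta> / (2 * (KV + 1))"
  have a: "0 < a" unfolding a_def using \<eta> KV_nonneg by simp
  define fr where "fr i = (if i = 3 then (\<lambda>s. a * sin (\<omega> / cs 3 * s)) else (\<lambda>s::real. 0::real))" for i :: nat
  define A where "A = mk fr"
  have cA: "\<forall>j<4. cmp A j = (\<lambda>x y z. vec4 (\<lambda>i. fr i (\<xi> i x y z)) j)"
    unfolding A_def using cmp_mk by blast
  have frb: "\<bar>fr i s\<bar> \<le> a" for i s
    unfolding fr_def using a by (auto simp: abs_mult intro: mult_left_le)
  have cAb: "\<bar>cmp A j x y z\<bar> \<le> KV * a" if "j < 4" for j x y z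
    using cA that by (simp add: vec4_bound frb)
  have AZ: "inZ2 c0 rho0 k l m A"
    unfolding inZ2_iff
  proof (intro exI conjI)
    show "\<forall>i\<in>{1..4}. fr i C1_differentiable_on UNIV"
    proof
      fix i :: nat assume "i \<in> {1..4}"
      show "fr i C1_differentiable_on UNIV"
      proof (cases "i = 3")
        case True
        have d: "((\<lambda>s. a * sin (\<omega> / cs 3 * s)) has_vector_derivative (a * (cos (\<omega> / cs 3 * x) * (\<omega> / cs 3)))) (at x)" for x
          unfolding has_real_derivative_iff_has_vector_derivative[symmetric]
          using cs3_ne by (auto intro!: derivative_eq_intros)
        have c: "continuous_on UNIV (\<lambda>x. a * (cos (\<omega> / cs 3 * x) * (\<omega> / cs 3)))"
          using cs3_ne by (intro continuous_intros) auto
        have fe: "fr i = (\<lambda>s. a * sin (\<omega> / cs 3 * s))" by (simp add: fr_def True)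
        show ?thesis unfolding fe C1_differentiable_on_def
          by (rule exI[where x="\<lambda>x. a * (cos (\<omega> / cs 3 * x) * (\<omega> / cs 3))"]) (use d c in auto)
      next
        case False
        then show ?thesis unfolding fr_def by simp
      qed
    qed
    show "\<forall>j<4. cmp A j = (\<lambda>x y z. vec4 (\<lambda>i. fr i (\<xi> i x y z)) j)" by (rule cA)
    show "\<forall>j<4. bounded3 (cmp A j)" unfolding bounded3_def using cAb by blast
  qed
  have "z2norm A \<le> KV * a" by (rule z2norm_le, rule supn_le) (rule cAb)
  also have "KV * a < \<eta>"
  proof -
    have "KV * a \<le> (KV + 1) * a" using a by simp
    also have "\<dots> = \<eta> / 2" unfolding a_def using KV_nonneg by (simp add: field_simps)
    finally show ?thesis using \<eta> by simp
  qed
  finally have zA: "z2norm A < \<eta>" .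
  define T where "T = 2 * ((KP + 1) / a + 1 / (4 * \<bar>\<omega>\<bar>)) + 1"
  have T: "0 < T" unfolding T_def using a KP_nonneg om by (simp add: add_pos_nonneg)
  obtain u where su: "is_solution U0 c0 rho0 \<omega> k l m T A u" using existence[OF AZ] by blast
  have small: "z2norm (u T) < 1" using H1[rule_format, OF AZ zA T su, of T] T by simp
  have i3: "(3::nat) \<in> {1..4}" by simp
  have rep: "hm u 3 T s = gr a T s" for s
  proof -
    have "\<bar>(\<lambda>\<tau> s. hm u 3 \<tau> s - gr a \<tau> s) T s\<bar> \<le> 0 * T"
    proof (rule transport_bound[where h="\<lambda>\<tau> s. hm u 3 \<tau> s - gr a \<tau> s" and Ht="\<lambda>\<tau> s. Htm u 3 \<tau> s - grt a \<tau> s"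
        and Hs="\<lambda>\<tau> s. Hsm u 3 \<tau> s - grs a \<tau> s" and c="cs 3"])
      show "0 \<le> T" "T \<le> T" using T by auto
      show "continuous_on ({0..T} \<times> UNIV) (\<lambda>p. hm u 3 (fst p) (snd p) - gr a (fst p) (snd p))"
        by (intro continuous_intros hm_cont[OF su] continuous_on_subset[OF gr_cont]) auto
      show "hm u 3 0 s - gr a 0 s = 0" for s by (simp add: hm_zero[OF su] gr_zero)
      show "((\<lambda>\<tau>. hm u 3 \<tau> s - gr a \<tau> s) has_real_derivative Htm u 3 \<tau> s - grt a \<tau> s) (at \<tau>)"
        if "0 < \<tau>" "\<tau> < T" for \<tau> s
        by (intro DERIV_diff hm_dt[OF su] gr_dt that)
      show "((\<lambda>s. hm u 3 \<tau> s - gr a \<tau> s) has_real_derivative Hsm u 3 \<tau> s - grs a \<tau> s) (at s)"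
        if "0 < \<tau>" "\<tau> < T" for \<tau> s
        using that by (intro DERIV_diff hm_ds[OF su] gr_ds) auto
      show "continuous_on ({0<..<T} \<times> UNIV) (\<lambda>p. Htm u 3 (fst p) (snd p) - grt a (fst p) (snd p))"
        by (intro continuous_intros hm_ct[OF su] continuous_on_subset[OF grt_cont]) auto
      show "\<bar>Htm u 3 \<tau> s - grt a \<tau> s + cs 3 * (Hsm u 3 \<tau> s - grs a \<tau> s)\<bar> \<le> 0"
        if "0 < \<tau>" "\<tau> < T" for \<tau> s
      proof -
        have "PVf 3 A s = fr 3 s" by (rule PVf_witness[OF cA i3])
        then have "PVf 3 A s = a * sin (\<omega> / cs 3 * s)" by (simp add: fr_def)
        then show ?thesis
          using hm_eq[OF su that i3, of s] gr_eq[of a \<tau> s] by (simp add: algebra_simps)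
      qed
    qed
    then show ?thesis by simp
  qed
  have lower: "KP + 1 \<le> \<bar>hm u 3 T (cs 3 * T)\<bar>"
  proof -
    have sb: "\<bar>sin (2 * \<omega> * T) / (4 * \<omega>)\<bar> \<le> 1 / (4 * \<bar>\<omega>\<bar>)"
      using om by (simp add: abs_divide abs_mult divide_right_mono)
    have "KP + 1 \<le> a * (T / 2 - 1 / (4 * \<bar>\<omega>\<bar>))"
      unfolding T_def using a by (simp add: field_simps)
    also have "\<dots> \<le> a * (T / 2 - sin (2 * \<omega> * T) / (4 * \<omega>))"
      apply (rule mult_left_mono)
      using sb abs_ge_self[of "sin (2 * \<omega> * T) / (4 * \<omega>)"] a by linarith+
    also have "\<dots> \<le> \<bar>hm u 3 T (cs 3 * T)\<bar>" unfolding rep gr_val by (rule abs_ge_self)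
    finally show ?thesis .
  qed
  have upper: "\<bar>hm u 3 T s\<bar> \<le> KP * z2norm (u T)" for s
  proof -
    have Z: "inZ2 c0 rho0 k l m (u T)" by (rule sol_Z2[OF su]) (use T in auto)
    have b: "\<bar>cmp (u T) j x y z\<bar> \<le> z2norm (u T)" if "j < 4" for j x y z
      using supn_ge[OF inZ2_bounded3[OF Z that], of x y z] z2norm_ge[OF that, of "u T"] by linarith
    show ?thesis unfolding hm_def PVf_def by (rule pv_bound[OF i3]) (use b in auto)
  qed
  have "KP * z2norm (u T) \<le> KP * 1"
    using small KP_nonneg by (intro mult_left_mono) auto
  then show False using lower upper[of "cs 3 * T"] by linarith
qed

end


theorem proposition23:
  fixes U0 c0 rho0 \<omega> :: real and k l m :: "nat \<Rightarrow> real"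
  assumes "U0 > 0" and "c0 > 0" and "rho0 > 0"
    and "\<omega> \<noteq> 0"
    and "k 1 * k 2 * k 3 * k 4 \<noteq> 0"
    and "Delta c0 rho0 k l m \<noteq> 0"
  shows "(\<forall>t0>0. well_posed U0 c0 rho0 \<omega> k l m t0) \<and> \<not> null_stable U0 c0 rho0 \<omega> k l m"
proof -
  interpret wp U0 c0 rho0 \<omega> k l m
    by unfold_locales (use assms in auto)
  have "\<forall>t0>0. well_posed U0 c0 rho0 \<omega> k l m t0"
    using well_posed_of_exist existence by blast
  moreover have "\<not> null_stable U0 c0 rho0 \<omega> k l m"
    unfolding null_stable_def using unstable by blast
  ultimately show ?thesis by blast
qed

end
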